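(* Let $a>0$. For any finite $\Lambda\subset\mathbb Z^2$, any $A\subset\Lambda$ and any $i\in\Lambda$, $$\big\langle h_i^2\,\big|\,|h_j|\le a\ \forall j\in A\big\rangle^0_\Lambda\le 4a^2+4\langle h_i^2\rangle^0_{\Lambda\setminus A}.$$
   Context: Fix an integer $r\ge1$. For each $k\in\mathbb Z^2$ let $\Psi_k:\mathbb R\to\mathbb R$ satisfy: $\Psi_k\equiv0$ if $\|k\|_1>r$; $\Psi_k=\Psi_{-k}$ and $\Psi_k(x)=\Psi_k(-x)$; $\Psi_k$ is $C^2$; $\Psi_k''\ge0$, and there is $c>0$ such that the translation-invariant random walk on $\mathbb Z^2$ with jump rates $P_c(0,j)=1$ if $\Psi_j''(h)\ge c$ for all $h$ and $0$ otherwise is irreducible. For finite $\Lambda\subset\mathbb Z^2$ and $b\in\mathbb R$, $$\mu^b_\Lambda(d\underline h)=\frac1{Z^b_\Lambda}\exp\Big\{-\sum_{\langle ij\rangle\cap\Lambda\neq\emptyset}\Psi_{j-i}(h_i-h_j)\Big\}\prod_{i\in\Lambda}dh_i\prod_{i\notin\Lambda}\delta_b(dh_i),$$ the sum being over pairs of distinct sites with $\|j-i\|_\infty\le r$ meeting $\Lambda$; $\langle\cdot\rangle^b_\Lambda$ denotes expectation. *)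

theory Defs
  imports "HOL-Analysis.Analysis"
begin

type_synonym site = "int \<times> int"

definition pdiff :: "site \<Rightarrow> site \<Rightarrow> site" where
  "pdiff j i = (fst j - fst i, snd j - snd i)"

definition padd :: "site \<Rightarrow> site \<Rightarrow> site" where
  "padd i j = (fst i + fst j, snd i + snd j)"

definition pneg :: "site \<Rightarrow> site" where
  "pneg k = (- fst k, - snd k)"

definition norm1 :: "site \<Rightarrow> int" where
  "norm1 k = \<bar>fst k\<bar> + \<bar>snd k\<bar>"

definition normInf :: "site \<Rightarrow> int" where
  "normInf k = max \<bar>fst k\<bar> \<bar>snd k\<bar>"

text \<open>Ordered pairs of distinct sites at sup-distance at most r meeting Lambda.
  Every unordered pair appears twice, hence the factor 1/2 in the Hamiltonian.\<close>
definition bonds :: "nat \<Rightarrow> site set \<Rightarrow> (site \<times> site) set" where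
  "bonds r \<Lambda> = {(i, j). i \<noteq> j \<and> normInf (pdiff j i) \<le> int r \<and> (i \<in> \<Lambda> \<or> j \<in> \<Lambda>)}"

definition hamiltonian :: "(site \<Rightarrow> real \<Rightarrow> real) \<Rightarrow> nat \<Rightarrow> site set \<Rightarrow> (site \<Rightarrow> real) \<Rightarrow> real" where
  "hamiltonian \<Psi> r \<Lambda> h = (1/2) * (\<Sum>(i, j)\<in>bonds r \<Lambda>. \<Psi> (pdiff j i) (h i - h j))"

definition ext_bc :: "site set \<Rightarrow> real \<Rightarrow> (site \<Rightarrow> real) \<Rightarrow> (site \<Rightarrow> real)" where
  "ext_bc \<Lambda> b h = (\<lambda>i. if i \<in> \<Lambda> then h i else b)"

definition gibbs_weight :: "(site \<Rightarrow> real \<Rightarrow> real) \<Rightarrow> nat \<Rightarrow> site set \<Rightarrow> real \<Rightarrow> (site \<Rightarrow> real) \<Rightarrow> real" where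
  "gibbs_weight \<Psi> r \<Lambda> b h = exp (- hamiltonian \<Psi> r \<Lambda> (ext_bc \<Lambda> b h))"

definition gibbs_exp :: "(site \<Rightarrow> real \<Rightarrow> real) \<Rightarrow> nat \<Rightarrow> site set \<Rightarrow> real \<Rightarrow> ((site \<Rightarrow> real) \<Rightarrow> real) \<Rightarrow> real" where
  "gibbs_exp \<Psi> r \<Lambda> b f =
     (\<integral>h. f (ext_bc \<Lambda> b h) * gibbs_weight \<Psi> r \<Lambda> b h \<partial>(PiM \<Lambda> (\<lambda>_. lborel)))
     / (\<integral>h. gibbs_weight \<Psi> r \<Lambda> b h \<partial>(PiM \<Lambda> (\<lambda>_. lborel)))"

definition gibbs_cond :: "(site \<Rightarrow> real \<Rightarrow> real) \<Rightarrow> nat \<Rightarrow> site set \<Rightarrow> real \<Rightarrow> ((site \<Rightarrow> real) \<Rightarrow> real) \<Rightarrow> (site \<Rightarrow> real) set \<Rightarrow> real" where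
  "gibbs_cond \<Psi> r \<Lambda> b f E =
     gibbs_exp \<Psi> r \<Lambda> b (\<lambda>h. f h * indicator E h) / gibbs_exp \<Psi> r \<Lambda> b (indicator E)"

definition admissible_potential :: "nat \<Rightarrow> (site \<Rightarrow> real \<Rightarrow> real) \<Rightarrow> bool" where
  "admissible_potential r \<Psi> \<longleftrightarrow>
     (\<forall>k. norm1 k > int r \<longrightarrow> (\<forall>x. \<Psi> k x = 0)) \<and>
     (\<forall>k x. \<Psi> k x = \<Psi> (pneg k) x) \<and>
     (\<forall>k x. \<Psi> k x = \<Psi> k (- x)) \<and>
     (\<forall>k x. \<Psi> k differentiable at x) \<and>
     (\<forall>k x. deriv (\<Psi> k) differentiable at x) \<and>
     (\<forall>k. continuous_on UNIV (deriv (deriv (\<Psi> k)))) \<and>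
     (\<forall>k x. deriv (deriv (\<Psi> k)) x \<ge> 0) \<and>
     (\<exists>c>0. let J = {j. \<forall>h. deriv (deriv (\<Psi> j)) h \<ge> c} in
        \<forall>x. ((0, 0), x) \<in> {(y, padd y j) | y j. j \<in> J}\<^sup>*)"

end

theory Submission
  imports Defs "HOL-Probability.Probability"
begin

lemma ennreal_key:
  fixes x y u v :: ennreal
  assumes "x \<le> u" "y \<le> u" "x * y \<le> u * v"
  shows "x + y \<le> u + v"
proof (cases "u = \<top> \<or> v = \<top>")
  case True then show ?thesis by auto
next
  case False
  then obtain u' v' where u: "u = ennreal u'" "u' \<ge> 0" and v: "v = ennreal v'" "v' \<ge> 0"
    by (metis ennreal_cases)
  obtain x' where x: "x = ennreal x'" "x' \<ge> 0" using assms(1) u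
    by (metis ennreal_cases ennreal_neq_top top.extremum_uniqueI)
  obtain y' where y: "y = ennreal y'" "y' \<ge> 0" using assms(2) u
    by (metis ennreal_cases ennreal_neq_top top.extremum_uniqueI)
  have h1: "x' \<le> u'" "y' \<le> u'" using assms u x y by (auto simp: ennreal_le_iff)
  have h3: "x' * y' \<le> u' * v'" using assms(3) u x y v
    by (simp add: ennreal_mult'[symmetric] ennreal_le_iff mult_nonneg_nonneg)
  have "x' + y' \<le> u' + v'"
  proof (cases "u' = 0")
    case True then show ?thesis using h1 x y v by auto
  next
    case False
    then have up: "u' > 0" using u by auto
    have "(u' - x') * (u' - y') \<ge> 0" using h1 by auto
    then have "u' * (x' + y') \<le> u' * (u' + v')" using h3 by (simp add: algebra_simps)
    then show ?thesis using up by simp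
  qed
  then show ?thesis using u v x y by (simp add: ennreal_plus[symmetric] del: ennreal_plus)
qed

lemma pointwise_4:
  fixes a b c d :: "real \<Rightarrow> ennreal"
  assumes H: "\<And>s t. a s * b t \<le> c (max s t) * d (min s t)"
  shows "a s * b t + a t * b s \<le> c s * d t + c t * d s"
proof -
  have key: "a s * b t + a t * b s \<le> c s * d t + c t * d s" if st: "s < t" for s t
  proof -
    have 1: "a s * b t \<le> c t * d s" using H[of s t] st by simp
    have 2: "a t * b s \<le> c t * d s" using H[of t s] st by simp
    have 3: "a s * b s \<le> c s * d s" using H[of s s] by simp
    have 4: "a t * b t \<le> c t * d t" using H[of t t] by simp
    have "(a s * b t) * (a t * b s) = (a s * b s) * (a t * b t)" by (simp add: ac_simps)
    also have "\<dots> \<le> (c s * d s) * (c t * d t)" using 3 4 by (rule mult_mono) auto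
    also have "\<dots> = (c t * d s) * (c s * d t)" by (simp add: ac_simps)
    finally have "a s * b t + a t * b s \<le> c t * d s + c s * d t"
      using 1 2 by (intro ennreal_key) auto
    then show ?thesis by (simp add: ac_simps)
  qed
  consider "s < t" | "s = t" | "t < s" by linarith
  then show ?thesis
  proof cases
    case 1 then show ?thesis using key by blast
  next
    case 2 then show ?thesis using H[of s s] by (simp add: add_mono)
  next
    case 3 then show ?thesis using key[of t s] by (simp add: ac_simps)
  qed
qed

lemma four_fun_1d:
  fixes a b c d :: "real \<Rightarrow> ennreal"
  assumes [measurable]: "a \<in> borel_measurable borel" "b \<in> borel_measurable borel"
    "c \<in> borel_measurable borel" "d \<in> borel_measurable borel"
  assumes H: "\<And>s t. a s * b t \<le> c (max s t) * d (min s t)"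
  shows "(\<integral>\<^sup>+s. a s \<partial>lborel) * (\<integral>\<^sup>+s. b s \<partial>lborel) \<le> (\<integral>\<^sup>+s. c s \<partial>lborel) * (\<integral>\<^sup>+s. d s \<partial>lborel)"
proof -
  let ?A = "\<integral>\<^sup>+s. a s \<partial>lborel" and ?B = "\<integral>\<^sup>+s. b s \<partial>lborel"
  let ?C = "\<integral>\<^sup>+s. c s \<partial>lborel" and ?D = "\<integral>\<^sup>+s. d s \<partial>lborel"
  have e1: "?A * ?B = (\<integral>\<^sup>+s. \<integral>\<^sup>+t. a s * b t \<partial>lborel \<partial>lborel)"
    by (simp add: nn_integral_cmult nn_integral_multc)
  have e2: "?A * ?B = (\<integral>\<^sup>+s. \<integral>\<^sup>+t. a t * b s \<partial>lborel \<partial>lborel)"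
    by (simp add: nn_integral_cmult nn_integral_multc mult.commute)
  have e3: "?C * ?D = (\<integral>\<^sup>+s. \<integral>\<^sup>+t. c s * d t \<partial>lborel \<partial>lborel)"
    by (simp add: nn_integral_cmult nn_integral_multc)
  have e4: "?C * ?D = (\<integral>\<^sup>+s. \<integral>\<^sup>+t. c t * d s \<partial>lborel \<partial>lborel)"
    by (simp add: nn_integral_cmult nn_integral_multc mult.commute)
  have "2 * (?A * ?B) = ?A * ?B + ?A * ?B" by (simp add: mult_2)
  also have "\<dots> = (\<integral>\<^sup>+s. (\<integral>\<^sup>+t. a s * b t \<partial>lborel) + (\<integral>\<^sup>+t. a t * b s \<partial>lborel) \<partial>lborel)"
    apply (subst nn_integral_add)
    using e1 e2 by auto
  also have "\<dots> = (\<integral>\<^sup>+s. \<integral>\<^sup>+t. a s * b t + a t * b s \<partial>lborel \<partial>lborel)"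
    by (intro nn_integral_cong, subst nn_integral_add) auto
  also have "\<dots> \<le> (\<integral>\<^sup>+s. \<integral>\<^sup>+t. c s * d t + c t * d s \<partial>lborel \<partial>lborel)"
    by (intro nn_integral_mono pointwise_4 H)
  also have "\<dots> = (\<integral>\<^sup>+s. (\<integral>\<^sup>+t. c s * d t \<partial>lborel) + (\<integral>\<^sup>+t. c t * d s \<partial>lborel) \<partial>lborel)"
    by (intro nn_integral_cong, subst nn_integral_add) auto
  also have "\<dots> = ?C * ?D + ?C * ?D"
    apply (subst nn_integral_add)
    using e3 e4 by auto
  also have "\<dots> = 2 * (?C * ?D)" by (simp add: mult_2)
  finally have "2 * (?A * ?B) \<le> 2 * (?C * ?D)" .
  then show ?thesis using ennreal_mult_le_mult_iff[of 2 "?A * ?B" "?C * ?D"] by simp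
qed

interpretation lb: product_sigma_finite "\<lambda>_::'i. (lborel :: real measure)"
  by standard

lemma sup_upd: "sup (x(k:=s)) (y(k:=t)) = (sup x y)(k := max s t)" for x y :: "'i \<Rightarrow> real"
  by (auto simp: fun_eq_iff sup_max)

lemma inf_upd: "inf (x(k:=s)) (y(k:=t)) = (inf x y)(k := min s t)" for x y :: "'i \<Rightarrow> real"
  by (auto simp: fun_eq_iff inf_min)

lemma space_upd: "x \<in> space (PiM S (\<lambda>_. lborel)) \<Longrightarrow> x(k:=s) \<in> space (PiM (insert k S) (\<lambda>_. lborel))"
  by (auto simp: space_PiM PiE_iff extensional_def)

lemma space_sup: "x \<in> space (PiM S (\<lambda>_. lborel)) \<Longrightarrow> y \<in> space (PiM S (\<lambda>_. lborel)) \<Longrightarrow>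
   sup x y \<in> space (PiM S (\<lambda>_. (lborel::real measure)))"
  by (auto simp: space_PiM PiE_iff extensional_def)

lemma space_inf: "x \<in> space (PiM S (\<lambda>_. lborel)) \<Longrightarrow> y \<in> space (PiM S (\<lambda>_. lborel)) \<Longrightarrow>
   inf x y \<in> space (PiM S (\<lambda>_. (lborel::real measure)))"
  by (auto simp: space_PiM PiE_iff extensional_def)

lemma marg_meas:
  assumes "f \<in> borel_measurable (PiM (insert k S) (\<lambda>_::'i. (lborel::real measure)))"
  shows "(\<lambda>x. \<integral>\<^sup>+s. f (x(k:=s)) \<partial>lborel) \<in> borel_measurable (PiM S (\<lambda>_. lborel))"
proof -
  have "(\<lambda>(x, s). f (x(k:=s))) \<in> borel_measurable (PiM S (\<lambda>_. lborel) \<Otimes>\<^sub>M lborel)"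
    using measurable_comp[OF measurable_add_dim[of k S "\<lambda>_::'i. (lborel::real measure)"] assms]
    by (simp add: comp_def case_prod_beta')
  then show ?thesis
    by (rule lborel.borel_measurable_nn_integral[where f="\<lambda>x s. f (x(k:=s))", simplified])
qed

lemma upd_meas:
  assumes "f \<in> borel_measurable (PiM (insert k S) (\<lambda>_::'i. (lborel::real measure)))"
    and "x \<in> space (PiM S (\<lambda>_. lborel))" "k \<notin> S"
  shows "(\<lambda>s. f (x(k:=s))) \<in> borel_measurable borel"
  using measurable_comp[OF measurable_component_update assms(1), OF assms(2,3)]
  by (simp add: comp_def fun_upd_def)

theorem four_functions:
  fixes \<alpha> \<beta> \<gamma> \<delta> :: "('i \<Rightarrow> real) \<Rightarrow> ennreal"
  assumes "finite S"
    and "\<alpha> \<in> borel_measurable (PiM S (\<lambda>_. lborel))" "\<beta> \<in> borel_measurable (PiM S (\<lambda>_. lborel))"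
        "\<gamma> \<in> borel_measurable (PiM S (\<lambda>_. lborel))" "\<delta> \<in> borel_measurable (PiM S (\<lambda>_. lborel))"
    and "\<And>x y. x \<in> space (PiM S (\<lambda>_. lborel)) \<Longrightarrow> y \<in> space (PiM S (\<lambda>_. lborel)) \<Longrightarrow>
           \<alpha> x * \<beta> y \<le> \<gamma> (sup x y) * \<delta> (inf x y)"
  shows "integral\<^sup>N (PiM S (\<lambda>_. lborel)) \<alpha> * integral\<^sup>N (PiM S (\<lambda>_. lborel)) \<beta>
       \<le> integral\<^sup>N (PiM S (\<lambda>_. lborel)) \<gamma> * integral\<^sup>N (PiM S (\<lambda>_. lborel)) \<delta>"
  using assms
proof (induction S arbitrary: \<alpha> \<beta> \<gamma> \<delta> rule: finite_induct)
  case empty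
  have sp: "(\<lambda>_. undefined) \<in> space (PiM {} (\<lambda>_::'i. (lborel::real measure)))"
    by (simp add: PiM_empty)
  have "\<alpha> (\<lambda>_. undefined) * \<beta> (\<lambda>_. undefined) \<le> \<gamma> (\<lambda>_. undefined) * \<delta> (\<lambda>_. undefined)"
    using empty.prems(5)[OF sp sp] by simp
  then show ?case by (simp add: PiM_empty nn_integral_count_space_finite)
next
  case (insert k S)
  let ?M = "PiM S (\<lambda>_::'i. (lborel::real measure))"
  define m where "m f = (\<lambda>x. \<integral>\<^sup>+s. f (x(k:=s)) \<partial>lborel)" for f :: "('i \<Rightarrow> real) \<Rightarrow> ennreal"
  have eq: "integral\<^sup>N (PiM (insert k S) (\<lambda>_. lborel)) f = integral\<^sup>N ?M (m f)"
    if "f \<in> borel_measurable (PiM (insert k S) (\<lambda>_. lborel))" for f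
    unfolding m_def by (rule lb.product_nn_integral_insert) (use insert that in auto)
  have mm: "m f \<in> borel_measurable ?M"
    if "f \<in> borel_measurable (PiM (insert k S) (\<lambda>_. lborel))" for f
    unfolding m_def by (rule marg_meas[OF that])
  have "integral\<^sup>N ?M (m \<alpha>) * integral\<^sup>N ?M (m \<beta>) \<le> integral\<^sup>N ?M (m \<gamma>) * integral\<^sup>N ?M (m \<delta>)"
  proof (rule insert.IH)
    fix x y assume x: "x \<in> space ?M" and y: "y \<in> space ?M"
    show "m \<alpha> x * m \<beta> y \<le> m \<gamma> (sup x y) * m \<delta> (inf x y)"
      unfolding m_def
    proof (rule four_fun_1d)
      show "(\<lambda>s. \<alpha> (x(k:=s))) \<in> borel_measurable borel"
        by (rule upd_meas) (use insert x in auto)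
      show "(\<lambda>s. \<beta> (y(k:=s))) \<in> borel_measurable borel"
        by (rule upd_meas) (use insert y in auto)
      show "(\<lambda>s. \<gamma> ((sup x y)(k:=s))) \<in> borel_measurable borel"
        by (rule upd_meas) (use insert space_sup[OF x y] in \<open>auto simp: sup_fun_def\<close>)
      show "(\<lambda>s. \<delta> ((inf x y)(k:=s))) \<in> borel_measurable borel"
        by (rule upd_meas) (use insert space_inf[OF x y] in \<open>auto simp: inf_fun_def\<close>)
      fix s t
      show "\<alpha> (x(k:=s)) * \<beta> (y(k:=t)) \<le> \<gamma> ((sup x y)(k:=max s t)) * \<delta> ((inf x y)(k:=min s t))"
      proof -
        have h: "\<alpha> (x(k:=s)) * \<beta> (y(k:=t)) \<le> \<gamma> (sup (x(k:=s)) (y(k:=t))) * \<delta> (inf (x(k:=s)) (y(k:=t)))"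
          by (rule insert.prems(5)[OF space_upd[OF x] space_upd[OF y]])
        then show ?thesis by (simp only: sup_upd inf_upd)
      qed
    qed
  qed (use mm insert.prems in auto)
  then show ?case using eq insert.prems by simp
qed

lemma shift_meas:
  "(\<lambda>x. \<lambda>j\<in>S. x j + c) \<in> measurable (PiM S (\<lambda>_::'i. (lborel::real measure))) (PiM S (\<lambda>_. lborel))"
  by (rule measurable_restrict) (auto intro!: measurable_PiM_component_rev)

lemma translate_PiM:
  fixes f :: "('i \<Rightarrow> real) \<Rightarrow> ennreal"
  assumes "finite S" and "f \<in> borel_measurable (PiM S (\<lambda>_. lborel))"
  shows "(\<integral>\<^sup>+x. f (\<lambda>j\<in>S. x j + c) \<partial>PiM S (\<lambda>_. lborel)) = integral\<^sup>N (PiM S (\<lambda>_. lborel)) f"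
  using assms
proof (induction S arbitrary: f rule: finite_induct)
  case empty
  then show ?case by (simp add: PiM_empty nn_integral_count_space_finite)
next
  case (insert k S)
  let ?M = "PiM S (\<lambda>_::'i. (lborel::real measure))"
  have fm: "(\<lambda>x. f (\<lambda>j\<in>insert k S. x j + c)) \<in> borel_measurable (PiM (insert k S) (\<lambda>_. lborel))"
    using measurable_comp[OF shift_meas insert.prems] by (simp add: comp_def)
  have "(\<integral>\<^sup>+x. f (\<lambda>j\<in>insert k S. x j + c) \<partial>PiM (insert k S) (\<lambda>_. lborel))
      = (\<integral>\<^sup>+x. \<integral>\<^sup>+s. f (\<lambda>j\<in>insert k S. (x(k:=s)) j + c) \<partial>lborel \<partial>?M)"
    by (rule lb.product_nn_integral_insert) (use insert fm in auto)
  also have "\<dots> = (\<integral>\<^sup>+x. \<integral>\<^sup>+s. f ((\<lambda>j\<in>S. x j + c)(k := c + 1 * s)) \<partial>lborel \<partial>?M)"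
    using insert by (intro nn_integral_cong arg_cong[where f=f]) (auto simp: fun_eq_iff)
  also have "\<dots> = (\<integral>\<^sup>+x. \<integral>\<^sup>+s. f ((\<lambda>j\<in>S. x j + c)(k := s)) \<partial>lborel \<partial>?M)"
  proof (rule nn_integral_cong)
    fix x assume x: "x \<in> space ?M"
    have "(\<lambda>j\<in>S. x j + c) \<in> space ?M"
      using measurable_space[OF shift_meas x] .
    then have m: "(\<lambda>s. f ((\<lambda>j\<in>S. x j + c)(k := s))) \<in> borel_measurable borel"
      by (rule upd_meas[OF insert.prems]) (use insert in auto)
    show "(\<integral>\<^sup>+s. f ((\<lambda>j\<in>S. x j + c)(k := c + 1 * s)) \<partial>lborel) = (\<integral>\<^sup>+s. f ((\<lambda>j\<in>S. x j + c)(k := s)) \<partial>lborel)"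
      using nn_integral_real_affine[OF m, of 1 c] by simp
  qed
  also have "\<dots> = (\<integral>\<^sup>+x. \<integral>\<^sup>+s. f (x(k := s)) \<partial>lborel \<partial>?M)"
    using insert.IH[OF marg_meas[OF insert.prems]] by (simp only:)
  also have "\<dots> = integral\<^sup>N (PiM (insert k S) (\<lambda>_. lborel)) f"
    by (rule lb.product_nn_integral_insert[symmetric]) (use insert in auto)
  finally show ?case .
qed



lemma deriv_incr:
  fixes f :: "real \<Rightarrow> real"
  assumes d2: "\<And>x. deriv f differentiable at x"
    and pos: "\<And>x. deriv (deriv f) x \<ge> c"
    and xy: "x \<le> y"
  shows "deriv f y - deriv f x \<ge> c * (y - x)"
proof (cases "x = y")
  case True then show ?thesis by simp
next
  case False
  then have "x < y" using xy by simp
  moreover have "\<forall>z. x \<le> z \<and> z \<le> y \<longrightarrow> DERIV (deriv f) z :> deriv (deriv f) z"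
    using d2 DERIV_deriv_iff_real_differentiable by blast
  ultimately obtain z where "deriv f y - deriv f x = (y - x) * deriv (deriv f) z"
    using MVT2[of x y "deriv f" "deriv (deriv f)"] by blast
  moreover have "(y - x) * deriv (deriv f) z \<ge> (y - x) * c"
    using pos[of z] \<open>x < y\<close> by (intro mult_left_mono) auto
  ultimately show ?thesis by (simp add: mult.commute)
qed

lemma deriv_zero_even:
  fixes f :: "real \<Rightarrow> real"
  assumes d1: "\<And>x. f differentiable at x" and ev: "\<And>x. f x = f (- x)"
  shows "deriv f 0 = 0"
proof -
  have D: "DERIV f 0 :> deriv f 0" using d1 DERIV_deriv_iff_real_differentiable by blast
  then have "DERIV (\<lambda>x. f (- x)) 0 :> - deriv f 0" using DERIV_mirror[where f=f and x=0 and y="deriv f 0"] by simp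
  moreover have "(\<lambda>x. f (- x)) = f" using ev by (auto simp: fun_eq_iff)
  ultimately have "DERIV f 0 :> - deriv f 0" by simp
  with D have "deriv f 0 = - deriv f 0" using DERIV_unique by blast
  then show ?thesis by simp
qed

lemma quad_lower:
  fixes f :: "real \<Rightarrow> real"
  assumes d1: "\<And>x. f differentiable at x" and d2: "\<And>x. deriv f differentiable at x"
    and pos: "\<And>x. deriv (deriv f) x \<ge> c" and ev: "\<And>x. f x = f (- x)"
  shows "f t \<ge> f 0 + c / 2 * t\<^sup>2"
proof -
  define g where "g x = f x - c / 2 * x\<^sup>2" for x
  define g' where "g' x = deriv f x - c * x" for x
  have dg: "DERIV g x :> g' x" for x
    unfolding g_def g'_def
    using d1[of x] DERIV_deriv_iff_real_differentiable
    by (auto intro!: derivative_eq_intros)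
  have f0: "deriv f 0 = 0" by (rule deriv_zero_even[OF d1 ev])
  have gp: "g' z \<ge> 0" if "z \<ge> 0" for z
    using deriv_incr[OF d2 pos, of 0 z] that f0 unfolding g'_def by simp
  have gn: "g' z \<le> 0" if "z \<le> 0" for z
    using deriv_incr[OF d2 pos, of z 0] that f0 unfolding g'_def by simp
  have "g t \<ge> g 0"
  proof (cases "t = 0")
    case True then show ?thesis by simp
  next
    case False
    show ?thesis
    proof (cases "t > 0")
      case True
      then obtain z where z: "0 < z" "z < t" "g t - g 0 = (t - 0) * g' z"
        using MVT2[of 0 t g g'] dg by blast
      moreover have "t * g' z \<ge> 0" using gp[of z] z True by simp
      ultimately show ?thesis by simp
    next
      case f: False
      then have "t < 0" using False by simp
      then obtain z where z: "t < z" "z < 0" "g 0 - g t = (0 - t) * g' z"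
        using MVT2[of t 0 g g'] dg by blast
      moreover have "t * g' z \<ge> 0" using gn[of z] z \<open>t < 0\<close> by (simp add: mult_nonpos_nonpos)
      ultimately show ?thesis by simp
    qed
  qed
  then show ?thesis unfolding g_def by simp
qed

lemma convex_from_deriv:
  fixes f :: "real \<Rightarrow> real"
  assumes d1: "\<And>x. f differentiable at x" and d2: "\<And>x. deriv f differentiable at x"
    and pos: "\<And>x. deriv (deriv f) x \<ge> 0"
  shows "convex_on UNIV f"
  by (rule convex_on_realI[where f'="deriv f"])
     (use d1 DERIV_deriv_iff_real_differentiable deriv_incr[OF d2 pos] in auto)

lemma convex_swap:
  fixes f :: "real \<Rightarrow> real"
  assumes cv: "convex_on UNIV f" and "A \<le> B" "B \<le> D" "A + D = B + C"
  shows "f B + f C \<le> f A + f D"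
proof (cases "A = D")
  case True
  then have "B = A" "C = A" using assms by auto
  then show ?thesis using True by simp
next
  case False
  then have AD: "A < D" using assms by simp
  define t where "t = (B - A) / (D - A)"
  have t01: "0 \<le> t" "t \<le> 1" using assms AD unfolding t_def by (auto simp: field_simps)
  have tt: "t * (D - A) = B - A" using AD unfolding t_def by simp
  have B: "B = (1 - t) *\<^sub>R A + t *\<^sub>R D"
  proof -
    have "(1 - t) *\<^sub>R A + t *\<^sub>R D = A + t * (D - A)" by (simp add: algebra_simps)
    then show ?thesis using tt by simp
  qed
  have C: "C = (1 - (1 - t)) *\<^sub>R A + (1 - t) *\<^sub>R D"
  proof -
    have "(1 - (1 - t)) *\<^sub>R A + (1 - t) *\<^sub>R D = D - t * (D - A)" by (simp add: algebra_simps)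
    then show ?thesis using tt assms(4) by simp
  qed
  have "f B \<le> (1 - t) * f A + t * f D" using convex_onD[OF cv t01] B by simp
  moreover have "f C \<le> (1 - (1 - t)) * f A + (1 - t) * f D"
    using convex_onD[OF cv, of "1 - t" A D] t01 C by simp
  ultimately show ?thesis by (simp add: algebra_simps)
qed

lemma convex_latt:
  fixes f :: "real \<Rightarrow> real"
  assumes cv: "convex_on UNIV f"
  shows "f (min s1 s2 - min t1 t2) + f (max s1 s2 - max t1 t2) \<le> f (s1 - t1) + f (s2 - t2)"
proof -
  have gen: "f (s1 - t2) + f (s2 - t1) \<le> f (s1 - t1) + f (s2 - t2)"
    if "s1 \<le> s2" "t2 \<le> t1" for s1 s2 t1 t2 :: real
    using convex_swap[OF cv, of "s1 - t1" "s1 - t2" "s2 - t2" "s2 - t1"] that by simp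
  consider "s1 \<le> s2" "t1 \<le> t2" | "s1 \<le> s2" "t2 \<le> t1" | "s2 \<le> s1" "t1 \<le> t2" | "s2 \<le> s1" "t2 \<le> t1"
    by linarith
  then show ?thesis
  proof cases
    case 1 then show ?thesis by simp
  next
    case 2 then show ?thesis using gen[of s1 s2 t2 t1] by (simp add: min_def max_def)
  next
    case 3 then show ?thesis using gen[of s2 s1 t1 t2] by (simp add: min_def max_def add.commute)
  next
    case 4 then show ?thesis by (simp add: min_def max_def add.commute)
  qed
qed



definition cfg :: "site set \<Rightarrow> (site \<Rightarrow> real) \<Rightarrow> (site \<Rightarrow> real) \<Rightarrow> (site \<Rightarrow> real)" where
  "cfg B G x = (\<lambda>j. if j \<in> B then x j else G j)"

lemma ext_bc_cfg: "ext_bc B b x = cfg B (\<lambda>_. b) x"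
  by (simp add: ext_bc_def cfg_def)

lemma normInf_swap: "normInf (pdiff i j) = normInf (pdiff j i)"
  by (simp add: normInf_def pdiff_def abs_minus_commute max.commute)

lemma finite_box: "finite {k :: site. normInf k \<le> int r}"
proof -
  have "{k :: site. normInf k \<le> int r} \<subseteq> {- int r..int r} \<times> {- int r..int r}"
    by (auto simp: normInf_def)
  then show ?thesis by (rule finite_subset) auto
qed

lemma finite_bonds:
  assumes "finite \<Lambda>" shows "finite (bonds r \<Lambda>)"
proof -
  let ?K = "{k :: site. normInf k \<le> int r}"
  have "bonds r \<Lambda> \<subseteq> (\<lambda>(i, k). (i, padd i k)) ` (\<Lambda> \<times> ?K) \<union> (\<lambda>(j, k). (padd j k, j)) ` (\<Lambda> \<times> ?K)"
  proof
    fix p assume p: "p \<in> bonds r \<Lambda>"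
    obtain i j where ij: "p = (i, j)" by (cases p)
    show "p \<in> (\<lambda>(i, k). (i, padd i k)) ` (\<Lambda> \<times> ?K) \<union> (\<lambda>(j, k). (padd j k, j)) ` (\<Lambda> \<times> ?K)"
    proof (cases "i \<in> \<Lambda>")
      case True
      have "(i, pdiff j i) \<in> \<Lambda> \<times> ?K" using p ij True by (auto simp: bonds_def)
      moreover have "padd i (pdiff j i) = j" by (simp add: padd_def pdiff_def)
      ultimately show ?thesis using ij by force
    next
      case False
      then have "j \<in> \<Lambda>" using p ij by (auto simp: bonds_def)
      moreover have "normInf (pdiff i j) \<le> int r" using p ij normInf_swap[of i j] by (auto simp: bonds_def)
      moreover have "padd j (pdiff i j) = i" by (simp add: padd_def pdiff_def)
      ultimately show ?thesis using ij by force
    qed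
  qed
  moreover have "finite ((\<lambda>(i, k). (i, padd i k)) ` (\<Lambda> \<times> ?K) \<union> (\<lambda>(j, k). (padd j k, j)) ` (\<Lambda> \<times> ?K))"
    using assms finite_box by auto
  ultimately show ?thesis by (rule finite_subset)
qed

lemma ham_lattice:
  assumes cvx: "\<And>k. convex_on UNIV (\<Psi> k)"
  shows "hamiltonian \<Psi> r B (inf X Y) + hamiltonian \<Psi> r B (sup X Y) \<le> hamiltonian \<Psi> r B X + hamiltonian \<Psi> r B Y"
proof -
  have "(\<Sum>(i, j)\<in>bonds r B. \<Psi> (pdiff j i) (inf X Y i - inf X Y j)) + (\<Sum>(i, j)\<in>bonds r B. \<Psi> (pdiff j i) (sup X Y i - sup X Y j))
     = (\<Sum>(i, j)\<in>bonds r B. \<Psi> (pdiff j i) (inf X Y i - inf X Y j) + \<Psi> (pdiff j i) (sup X Y i - sup X Y j))"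
    by (simp add: sum.distrib[symmetric] case_prod_beta')
  also have "\<dots> \<le> (\<Sum>(i, j)\<in>bonds r B. \<Psi> (pdiff j i) (X i - X j) + \<Psi> (pdiff j i) (Y i - Y j))"
    by (rule sum_mono) (auto simp: inf_min sup_max intro: convex_latt[OF cvx])
  also have "\<dots> = (\<Sum>(i, j)\<in>bonds r B. \<Psi> (pdiff j i) (X i - X j)) + (\<Sum>(i, j)\<in>bonds r B. \<Psi> (pdiff j i) (Y i - Y j))"
    by (simp add: sum.distrib[symmetric] case_prod_beta')
  finally show ?thesis unfolding hamiltonian_def by simp
qed

lemma ham_shift: "hamiltonian \<Psi> r B (\<lambda>j. X j + c) = hamiltonian \<Psi> r B X"
  unfolding hamiltonian_def by simp

lemma cfg_inf: "(\<And>j. G1 j \<le> G2 j) \<Longrightarrow> inf (cfg B G1 x) (cfg B G2 y) = cfg B G1 (inf x y)"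
  by (auto simp: cfg_def fun_eq_iff inf_min min_def)

lemma cfg_sup: "(\<And>j. G1 j \<le> G2 j) \<Longrightarrow> sup (cfg B G1 x) (cfg B G2 y) = cfg B G2 (sup x y)"
  by (auto simp: cfg_def fun_eq_iff sup_max max_def)

lemma ham_split:
  assumes "finite \<Lambda>" "B \<subseteq> \<Lambda>" "\<And>j. j \<notin> B \<Longrightarrow> X j = X' j"
  shows "hamiltonian \<Psi> r \<Lambda> X - hamiltonian \<Psi> r B X = hamiltonian \<Psi> r \<Lambda> X' - hamiltonian \<Psi> r B X'"
proof -
  have sub: "bonds r B \<subseteq> bonds r \<Lambda>" using assms(2) by (auto simp: bonds_def)
  have fin: "finite (bonds r \<Lambda>)" by (rule finite_bonds[OF assms(1)])
  have eq: "(\<Sum>(i, j)\<in>bonds r \<Lambda>. \<Psi> (pdiff j i) (Z i - Z j)) - (\<Sum>(i, j)\<in>bonds r B. \<Psi> (pdiff j i) (Z i - Z j))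
      = (\<Sum>(i, j)\<in>bonds r \<Lambda> - bonds r B. \<Psi> (pdiff j i) (Z i - Z j))" for Z
    using sum.subset_diff[OF sub fin, of "\<lambda>(i, j). \<Psi> (pdiff j i) (Z i - Z j)"] by simp
  have "(\<Sum>(i, j)\<in>bonds r \<Lambda> - bonds r B. \<Psi> (pdiff j i) (X i - X j)) = (\<Sum>(i, j)\<in>bonds r \<Lambda> - bonds r B. \<Psi> (pdiff j i) (X' i - X' j))"
  proof (rule sum.cong)
    fix p assume p: "p \<in> bonds r \<Lambda> - bonds r B"
    obtain u v where uv: "p = (u, v)" by (cases p)
    have "u \<notin> B \<and> v \<notin> B" using p uv unfolding bonds_def by blast
    then show "(case p of (i, j) \<Rightarrow> \<Psi> (pdiff j i) (X i - X j)) = (case p of (i, j) \<Rightarrow> \<Psi> (pdiff j i) (X' i - X' j))"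
      using uv assms(3) by simp
  qed simp
  then show ?thesis using eq[of X] eq[of X'] unfolding hamiltonian_def by (simp add: right_diff_distrib[symmetric])
qed

lemma psi_cont: "(\<And>x. f differentiable at x) \<Longrightarrow> f \<in> borel_measurable borel" for f :: "real \<Rightarrow> real"
  by (intro borel_measurable_continuous_onI continuous_at_imp_continuous_on)
     (auto intro: differentiable_imp_continuous_within)

lemma ham_meas:
  assumes "finite \<Lambda>" and d: "\<And>k x. \<Psi> k differentiable at x"
  shows "(\<lambda>x. hamiltonian \<Psi> r \<Lambda> (cfg B G x)) \<in> borel_measurable (PiM B (\<lambda>_. lborel))"
proof -
  have comp: "(\<lambda>x. cfg B G x u) \<in> borel_measurable (PiM B (\<lambda>_. lborel))" for u
    by (cases "u \<in> B") (auto simp: cfg_def)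
  have "(\<lambda>x. \<Psi> k (cfg B G x u - cfg B G x v)) \<in> borel_measurable (PiM B (\<lambda>_. lborel))" for k u v
    using measurable_comp[OF borel_measurable_diff[OF comp comp] psi_cont[OF d]] by (simp add: comp_def)
  then show ?thesis unfolding hamiltonian_def
    by (intro borel_measurable_times borel_measurable_const borel_measurable_sum) (auto simp: case_prod_beta')
qed



definition rho :: "(site \<Rightarrow> real \<Rightarrow> real) \<Rightarrow> nat \<Rightarrow> site set \<Rightarrow> (site \<Rightarrow> real) \<Rightarrow> (site \<Rightarrow> real) \<Rightarrow> ennreal" where
  "rho \<Psi> r B G x = ennreal (exp (- hamiltonian \<Psi> r B (cfg B G x)))"

lemma rho_meas:
  assumes "finite B" and d: "\<And>k x. \<Psi> k differentiable at x"
  shows "rho \<Psi> r B G \<in> borel_measurable (PiM B (\<lambda>_. lborel))"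
  using ham_meas[OF assms, where r=r and B=B and G=G] unfolding rho_def by measurable

lemma holley_pair:
  assumes cvx: "\<And>k. convex_on UNIV (\<Psi> k)" and le: "\<And>j. G1 j \<le> G2 j"
  shows "rho \<Psi> r B G1 x * rho \<Psi> r B G2 y \<le> rho \<Psi> r B G1 (inf x y) * rho \<Psi> r B G2 (sup x y)"
proof -
  have "hamiltonian \<Psi> r B (inf (cfg B G1 x) (cfg B G2 y)) + hamiltonian \<Psi> r B (sup (cfg B G1 x) (cfg B G2 y))
      \<le> hamiltonian \<Psi> r B (cfg B G1 x) + hamiltonian \<Psi> r B (cfg B G2 y)"
    by (rule ham_lattice[OF cvx])
  then have h: "hamiltonian \<Psi> r B (cfg B G1 (inf x y)) + hamiltonian \<Psi> r B (cfg B G2 (sup x y))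
      \<le> hamiltonian \<Psi> r B (cfg B G1 x) + hamiltonian \<Psi> r B (cfg B G2 y)"
    using cfg_inf[OF le] cfg_sup[OF le] by simp
  show ?thesis unfolding rho_def
    using h by (simp add: ennreal_mult''[symmetric] exp_add[symmetric] del: ennreal_mult'')
qed

lemma rho_shift:
  "rho \<Psi> r B (\<lambda>_. c) x = rho \<Psi> r B (\<lambda>_. 0) (\<lambda>j\<in>B. x j + - c)"
proof -
  have "cfg B (\<lambda>_. 0) (\<lambda>j\<in>B. x j + - c) = (\<lambda>j. cfg B (\<lambda>_. c) x j + - c)"
    by (auto simp: cfg_def fun_eq_iff)
  moreover have "hamiltonian \<Psi> r B (\<lambda>j. X j - c) = hamiltonian \<Psi> r B X" for X
    using ham_shift[of \<Psi> r B X "- c"] by simp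
  ultimately show ?thesis unfolding rho_def by simp
qed

lemma sq_bound: "(max (t + a) 0)\<^sup>2 \<le> 2 * a\<^sup>2 + 2 * t\<^sup>2" for t a :: real
proof (cases "t + a \<ge> 0")
  case True
  have "(t + a)\<^sup>2 \<le> 2 * a\<^sup>2 + 2 * t\<^sup>2" using sum_squares_ge_zero[of "t - a" 0]
    by (simp add: power2_eq_square algebra_simps)
  then show ?thesis using True by (simp add: max_def)
next
  case False then show ?thesis by (simp add: max_def)
qed

lemma enn_sq_bound: "ennreal ((max (t + a) 0)\<^sup>2) \<le> ennreal (2 * a\<^sup>2) + 2 * ennreal (t\<^sup>2)"
proof -
  have "ennreal ((max (t + a) 0)\<^sup>2) \<le> ennreal (2 * a\<^sup>2 + 2 * t\<^sup>2)" by (rule ennreal_leI[OF sq_bound])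
  also have "\<dots> = ennreal (2 * a\<^sup>2) + ennreal (2 * t\<^sup>2)" by (rule ennreal_plus) auto
  also have "ennreal (2 * t\<^sup>2) = 2 * ennreal (t\<^sup>2)" by (simp add: ennreal_mult)
  finally show ?thesis .
qed

lemma enn_comb:
  fixes a z m0 :: real assumes "z \<ge> 0" "m0 \<ge> 0"
  shows "ennreal (2 * a\<^sup>2) * ennreal z + 2 * ennreal m0 = ennreal (2 * a\<^sup>2 * z + 2 * m0)"
proof -
  have 1: "ennreal (2 * a\<^sup>2) * ennreal z = ennreal (2 * a\<^sup>2 * z)" using assms by (simp add: ennreal_mult)
  have 2: "2 * ennreal m0 = ennreal (2 * m0)" using assms by (simp add: ennreal_mult)
  have 3: "ennreal (2 * a\<^sup>2 * z + 2 * m0) = ennreal (2 * a\<^sup>2 * z) + ennreal (2 * m0)"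
    by (rule ennreal_plus) (use assms in auto)
  show ?thesis using 1 2 3 by simp
qed

lemma core_holley:
  fixes \<Psi> :: "site \<Rightarrow> real \<Rightarrow> real"
  assumes fin: "finite B" and iB: "i \<in> B"
    and cvx: "\<And>k. convex_on UNIV (\<Psi> k)" and d: "\<And>k x. \<Psi> k differentiable at x"
    and a: "a \<ge> 0" and Gb: "\<And>j. \<bar>G j\<bar> \<le> a"
    and Z0: "(\<integral>\<^sup>+x. rho \<Psi> r B (\<lambda>_. 0) x \<partial>PiM B (\<lambda>_. lborel)) = ennreal z" and z: "z > 0"
    and M0: "(\<integral>\<^sup>+x. ennreal ((x i)\<^sup>2) * rho \<Psi> r B (\<lambda>_. 0) x \<partial>PiM B (\<lambda>_. lborel)) = ennreal m0" and m0: "m0 \<ge> 0"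
  shows "(\<integral>\<^sup>+x. ennreal ((x i)\<^sup>2) * rho \<Psi> r B G x \<partial>PiM B (\<lambda>_. lborel))
       \<le> ennreal (4 * a\<^sup>2 + 4 * (m0 / z)) * (\<integral>\<^sup>+x. rho \<Psi> r B G x \<partial>PiM B (\<lambda>_. lborel))"
proof -
  let ?M = "PiM B (\<lambda>_::site. lborel :: real measure)"
  let ?r = "rho \<Psi> r B"
  have xi: "(\<lambda>x. x i) \<in> borel_measurable ?M"
    using measurable_component_singleton[OF iB, of "\<lambda>_. lborel"] by simp
  have cm: "(\<lambda>x. ennreal (g (x i))) \<in> borel_measurable ?M" if "continuous_on UNIV g" for g :: "real \<Rightarrow> real"
    using measurable_compose[OF measurable_compose[OF xi borel_measurable_continuous_onI[OF that]] measurable_ennreal] .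
  define P where "P x = ennreal ((max (x i) 0)\<^sup>2)" for x :: "site \<Rightarrow> real"
  define Q where "Q x = ennreal ((max (- x i) 0)\<^sup>2)" for x :: "site \<Rightarrow> real"
  have Pm: "P \<in> borel_measurable ?M" unfolding P_def by (rule cm[of "\<lambda>t. (max t 0)\<^sup>2"]) (intro continuous_intros)
  have Qm: "Q \<in> borel_measurable ?M" unfolding Q_def by (rule cm[of "\<lambda>t. (max (- t) 0)\<^sup>2"]) (intro continuous_intros)
  have rm: "?r G' \<in> borel_measurable ?M" for G' by (rule rho_meas[OF fin d])
  have x2m: "(\<lambda>x. ennreal ((x i)\<^sup>2)) \<in> borel_measurable ?M" by (rule cm[of "\<lambda>t. t\<^sup>2"]) (intro continuous_intros)
  have x2r: "(\<lambda>y. ennreal ((y i)\<^sup>2) * ?r (\<lambda>_. 0) y) \<in> borel_measurable ?M"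
    by (rule borel_measurable_times_ennreal[OF x2m rm])
  let ?RG = "\<integral>\<^sup>+x. ?r G x \<partial>?M"
  let ?Z = "\<lambda>c. \<integral>\<^sup>+x. ?r (\<lambda>_. c) x \<partial>?M"
  have Zc: "?Z c = ennreal z" for c
  proof -
    have "?Z c = (\<integral>\<^sup>+x. ?r (\<lambda>_. 0) (\<lambda>j\<in>B. x j + - c) \<partial>?M)"
      by (simp add: rho_shift[of _ _ _ c])
    also have "\<dots> = ennreal z" using translate_PiM[OF fin rm, where c="- c"] Z0 by simp
    finally show ?thesis .
  qed
  have Pbound: "(\<integral>\<^sup>+x. P x * ?r (\<lambda>_. a) x \<partial>?M) \<le> ennreal (2 * a\<^sup>2 * z + 2 * m0)"
  proof -
    define F where "F y = ennreal ((max (y i + a) 0)\<^sup>2) * ?r (\<lambda>_. 0) y" for y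
    have Fm: "F \<in> borel_measurable ?M" unfolding F_def
      by (intro borel_measurable_times_ennreal rm cm[of "\<lambda>t. (max (t + a) 0)\<^sup>2"]) (intro continuous_intros)
    have "(\<integral>\<^sup>+x. P x * ?r (\<lambda>_. a) x \<partial>?M) = (\<integral>\<^sup>+x. F (\<lambda>j\<in>B. x j + - a) \<partial>?M)"
      unfolding F_def P_def using iB by (simp add: rho_shift[of _ _ _ a])
    also have "\<dots> = integral\<^sup>N ?M F" by (rule translate_PiM[OF fin Fm])
    also have "\<dots> \<le> (\<integral>\<^sup>+y. ennreal (2 * a\<^sup>2) * ?r (\<lambda>_. 0) y + 2 * (ennreal ((y i)\<^sup>2) * ?r (\<lambda>_. 0) y) \<partial>?M)"
      unfolding F_def
    proof (rule nn_integral_mono)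
      fix y
      have "ennreal ((max (y i + a) 0)\<^sup>2) \<le> ennreal (2 * a\<^sup>2) + 2 * ennreal ((y i)\<^sup>2)"
        by (rule enn_sq_bound)
      then have "ennreal ((max (y i + a) 0)\<^sup>2) * ?r (\<lambda>_. 0) y \<le> (ennreal (2 * a\<^sup>2) + 2 * ennreal ((y i)\<^sup>2)) * ?r (\<lambda>_. 0) y"
        by (rule mult_right_mono) simp
      then show "ennreal ((max (y i + a) 0)\<^sup>2) * ?r (\<lambda>_. 0) y \<le> ennreal (2 * a\<^sup>2) * ?r (\<lambda>_. 0) y + 2 * (ennreal ((y i)\<^sup>2) * ?r (\<lambda>_. 0) y)"
        by (simp add: distrib_right mult.assoc)
    qed
    also have "\<dots> = (\<integral>\<^sup>+y. ennreal (2 * a\<^sup>2) * ?r (\<lambda>_. 0) y \<partial>?M) + (\<integral>\<^sup>+y. 2 * (ennreal ((y i)\<^sup>2) * ?r (\<lambda>_. 0) y) \<partial>?M)"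
      by (rule nn_integral_add) (use rm x2r in \<open>auto intro!: borel_measurable_times_ennreal borel_measurable_const\<close>)
    also have "\<dots> = ennreal (2 * a\<^sup>2) * ennreal z + 2 * ennreal m0"
      using Z0 M0 by (simp add: nn_integral_cmult[OF rm] nn_integral_cmult[OF x2r])
    also have "\<dots> = ennreal (2 * a\<^sup>2 * z + 2 * m0)"
      by (rule enn_comb) (use z m0 in auto)
    finally show ?thesis .
  qed
  have Qbound: "(\<integral>\<^sup>+x. Q x * ?r (\<lambda>_. - a) x \<partial>?M) \<le> ennreal (2 * a\<^sup>2 * z + 2 * m0)"
  proof -
    define F where "F y = ennreal ((max (- y i + a) 0)\<^sup>2) * ?r (\<lambda>_. 0) y" for y
    have Fm: "F \<in> borel_measurable ?M" unfolding F_def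
      by (intro borel_measurable_times_ennreal rm cm[of "\<lambda>t. (max (- t + a) 0)\<^sup>2"]) (intro continuous_intros)
    have "(\<integral>\<^sup>+x. Q x * ?r (\<lambda>_. - a) x \<partial>?M) = (\<integral>\<^sup>+x. F (\<lambda>j\<in>B. x j + - (- a)) \<partial>?M)"
      unfolding F_def Q_def using iB by (simp add: rho_shift[of _ _ _ "- a"])
    also have "\<dots> = integral\<^sup>N ?M F" by (rule translate_PiM[OF fin Fm])
    also have "\<dots> \<le> (\<integral>\<^sup>+y. ennreal (2 * a\<^sup>2) * ?r (\<lambda>_. 0) y + 2 * (ennreal ((y i)\<^sup>2) * ?r (\<lambda>_. 0) y) \<partial>?M)"
      unfolding F_def
    proof (rule nn_integral_mono)
      fix y
      have "ennreal ((max (- y i + a) 0)\<^sup>2) \<le> ennreal (2 * a\<^sup>2) + 2 * ennreal ((y i)\<^sup>2)"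
        using enn_sq_bound[of "- y i" a] by simp
      then have "ennreal ((max (- y i + a) 0)\<^sup>2) * ?r (\<lambda>_. 0) y \<le> (ennreal (2 * a\<^sup>2) + 2 * ennreal ((y i)\<^sup>2)) * ?r (\<lambda>_. 0) y"
        by (rule mult_right_mono) simp
      then show "ennreal ((max (- y i + a) 0)\<^sup>2) * ?r (\<lambda>_. 0) y \<le> ennreal (2 * a\<^sup>2) * ?r (\<lambda>_. 0) y + 2 * (ennreal ((y i)\<^sup>2) * ?r (\<lambda>_. 0) y)"
        by (simp add: distrib_right mult.assoc)
    qed
    also have "\<dots> = (\<integral>\<^sup>+y. ennreal (2 * a\<^sup>2) * ?r (\<lambda>_. 0) y \<partial>?M) + (\<integral>\<^sup>+y. 2 * (ennreal ((y i)\<^sup>2) * ?r (\<lambda>_. 0) y) \<partial>?M)"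
      by (rule nn_integral_add) (use rm x2r in \<open>auto intro!: borel_measurable_times_ennreal borel_measurable_const\<close>)
    also have "\<dots> = ennreal (2 * a\<^sup>2) * ennreal z + 2 * ennreal m0"
      using Z0 M0 by (simp add: nn_integral_cmult[OF rm] nn_integral_cmult[OF x2r])
    also have "\<dots> = ennreal (2 * a\<^sup>2 * z + 2 * m0)"
      by (rule enn_comb) (use z m0 in auto)
    finally show ?thesis .
  qed
  have Glo: "- a \<le> G j" and Ghi: "G j \<le> a" for j using Gb[of j] by (simp_all add: abs_le_iff)
  have F1: "(\<integral>\<^sup>+x. P x * ?r G x \<partial>?M) * ?Z a \<le> (\<integral>\<^sup>+x. P x * ?r (\<lambda>_. a) x \<partial>?M) * ?RG"
  proof (rule four_functions[OF fin])
    fix x y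
    have h1: "?r G x * ?r (\<lambda>_. a) y \<le> ?r G (inf x y) * ?r (\<lambda>_. a) (sup x y)"
      by (rule holley_pair[OF cvx Ghi])
    have h2: "P x \<le> P (sup x y)" unfolding P_def
      by (auto intro!: power_mono simp: sup_max)
    have "P x * (?r G x * ?r (\<lambda>_. a) y) \<le> P (sup x y) * (?r G (inf x y) * ?r (\<lambda>_. a) (sup x y))"
      by (rule mult_mono[OF h2 h1]) auto
    then show "P x * ?r G x * ?r (\<lambda>_. a) y \<le> P (sup x y) * ?r (\<lambda>_. a) (sup x y) * ?r G (inf x y)"
      by (simp add: mult_ac)
  qed (rule borel_measurable_times_ennreal Pm Qm rm)+
  have F2: "?Z (- a) * (\<integral>\<^sup>+x. Q x * ?r G x \<partial>?M) \<le> ?RG * (\<integral>\<^sup>+x. Q x * ?r (\<lambda>_. - a) x \<partial>?M)"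
  proof (rule four_functions[OF fin])
    fix x y
    have h1: "?r (\<lambda>_. - a) x * ?r G y \<le> ?r (\<lambda>_. - a) (inf x y) * ?r G (sup x y)"
      by (rule holley_pair[OF cvx Glo])
    have h2: "Q y \<le> Q (inf x y)" unfolding Q_def
      by (auto intro!: power_mono simp: inf_min)
    have "Q y * (?r (\<lambda>_. - a) x * ?r G y) \<le> Q (inf x y) * (?r (\<lambda>_. - a) (inf x y) * ?r G (sup x y))"
      by (rule mult_mono[OF h2 h1]) auto
    then show "?r (\<lambda>_. - a) x * (Q y * ?r G y) \<le> ?r G (sup x y) * (Q (inf x y) * ?r (\<lambda>_. - a) (inf x y))"
      by (simp add: mult_ac)
  qed (rule borel_measurable_times_ennreal Pm Qm rm)+
  have split: "(\<integral>\<^sup>+x. ennreal ((x i)\<^sup>2) * ?r G x \<partial>?M) = (\<integral>\<^sup>+x. P x * ?r G x \<partial>?M) + (\<integral>\<^sup>+x. Q x * ?r G x \<partial>?M)"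
  proof -
    have "ennreal ((x i)\<^sup>2) * ?r G x = P x * ?r G x + Q x * ?r G x" for x
    proof -
      have "(x i)\<^sup>2 = (max (x i) 0)\<^sup>2 + (max (- x i) 0)\<^sup>2" by (simp add: max_def power2_eq_square)
      then have "ennreal ((x i)\<^sup>2) = P x + Q x" unfolding P_def Q_def
        by (simp add: ennreal_plus[symmetric] del: ennreal_plus)
      then show ?thesis by (simp add: distrib_right)
    qed
    then show ?thesis by (simp add: nn_integral_add Pm Qm rm borel_measurable_times_ennreal)
  qed
  let ?K = "ennreal (2 * a\<^sup>2 * z + 2 * m0)"
  have "ennreal z * (\<integral>\<^sup>+x. ennreal ((x i)\<^sup>2) * ?r G x \<partial>?M)
      = (\<integral>\<^sup>+x. P x * ?r G x \<partial>?M) * ?Z a + ?Z (- a) * (\<integral>\<^sup>+x. Q x * ?r G x \<partial>?M)"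
    unfolding split Zc by (simp add: algebra_simps)
  also have "\<dots> \<le> ?K * ?RG + ?RG * ?K"
  proof (rule add_mono)
    show "(\<integral>\<^sup>+x. P x * ?r G x \<partial>?M) * ?Z a \<le> ?K * ?RG"
      using F1 mult_right_mono[OF Pbound, of ?RG] by (rule order_trans) simp
    show "?Z (- a) * (\<integral>\<^sup>+x. Q x * ?r G x \<partial>?M) \<le> ?RG * ?K"
      using F2 mult_left_mono[OF Qbound, of ?RG] by (rule order_trans) simp
  qed
  also have "\<dots> = ennreal z * (ennreal (4 * a\<^sup>2 + 4 * (m0 / z)) * ?RG)"
  proof -
    have e: "ennreal z * ennreal (4 * a\<^sup>2 + 4 * (m0 / z)) = ?K + ?K"
      using z m0 by (simp add: ennreal_mult'[symmetric] ennreal_plus[symmetric] field_simps del: ennreal_plus)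
    have "?K * ?RG + ?RG * ?K = (?K + ?K) * ?RG" by (simp add: algebra_simps)
    also have "\<dots> = (ennreal z * ennreal (4 * a\<^sup>2 + 4 * (m0 / z))) * ?RG" by (simp only: e)
    also have "\<dots> = ennreal z * (ennreal (4 * a\<^sup>2 + 4 * (m0 / z)) * ?RG)" by (simp only: mult.assoc)
    finally show ?thesis .
  qed
  finally show ?thesis
    using ennreal_mult_le_mult_iff[of "ennreal z"] z by simp
qed



lemma gauss_fin:
  fixes \<kappa> :: real assumes k: "\<kappa> > 0"
  shows "(\<integral>\<^sup>+t. ennreal (exp (- \<kappa> * t\<^sup>2)) \<partial>lborel) < \<infinity>"
proof -
  define \<sigma> where "\<sigma> = sqrt (1 / (2 * \<kappa>))"
  have s2: "\<sigma>\<^sup>2 = 1 / (2 * \<kappa>)" using k unfolding \<sigma>_def by simp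
  have sp: "\<sigma> > 0" using k unfolding \<sigma>_def by simp
  define K where "K = sqrt (2 * pi * \<sigma>\<^sup>2)"
  have Kp: "K > 0" using sp unfolding K_def by simp
  have eq: "exp (- \<kappa> * t\<^sup>2) = K * normal_density 0 \<sigma> t" for t
  proof -
    have "- (t - 0)\<^sup>2 / (2 * \<sigma>\<^sup>2) = - \<kappa> * t\<^sup>2" using k by (simp add: s2 field_simps)
    then show ?thesis unfolding normal_density_def K_def using Kp K_def sp by simp
  qed
  have "(\<integral>\<^sup>+t. ennreal (exp (- \<kappa> * t\<^sup>2)) \<partial>lborel) = ennreal K * (\<integral>\<^sup>+t. ennreal (normal_density 0 \<sigma> t) \<partial>lborel)"
    unfolding eq using Kp by (simp add: ennreal_mult' nn_integral_cmult)
  also have "(\<integral>\<^sup>+t. ennreal (normal_density 0 \<sigma> t) \<partial>lborel) = ennreal 1"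
    using sp integrable_normal_density[OF sp] integral_normal_density[OF sp]
    by (subst nn_integral_eq_integral) auto
  finally show ?thesis by simp
qed

lemma gauss_prod_fin:
  fixes \<kappa> :: real and B :: "site set" assumes k: "\<kappa> > 0" and fin: "finite B"
  shows "(\<integral>\<^sup>+x. ennreal (exp (- \<kappa> * (\<Sum>j\<in>B. (x j)\<^sup>2))) \<partial>PiM B (\<lambda>_. lborel)) < \<infinity>"
proof -
  have "(\<integral>\<^sup>+x. ennreal (exp (- \<kappa> * (\<Sum>j\<in>B. (x j)\<^sup>2))) \<partial>PiM B (\<lambda>_. lborel))
      = (\<integral>\<^sup>+x. (\<Prod>j\<in>B. ennreal (exp (- \<kappa> * (x j)\<^sup>2))) \<partial>PiM B (\<lambda>_. lborel))"
  proof (intro nn_integral_cong)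
    fix x :: "site \<Rightarrow> real"
    have "exp (- \<kappa> * (\<Sum>j\<in>B. (x j)\<^sup>2)) = exp (\<Sum>j\<in>B. - \<kappa> * (x j)\<^sup>2)"
      by (simp add: sum_distrib_left sum_negf)
    also have "\<dots> = (\<Prod>j\<in>B. exp (- \<kappa> * (x j)\<^sup>2))" by (rule exp_sum[OF fin])
    finally show "ennreal (exp (- \<kappa> * (\<Sum>j\<in>B. (x j)\<^sup>2))) = (\<Prod>j\<in>B. ennreal (exp (- \<kappa> * (x j)\<^sup>2)))"
      by (simp add: prod_ennreal)
  qed
  also have "\<dots> = (\<Prod>j\<in>B. (\<integral>\<^sup>+t. ennreal (exp (- \<kappa> * t\<^sup>2)) \<partial>lborel))"
    by (rule lb.product_nn_integral_prod[OF fin]) measurable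
  also have "\<dots> < \<infinity>"
    using gauss_fin[OF k] by (simp add: power_less_top_ennreal)
  finally show ?thesis .
qed



definition Qf :: "site set \<Rightarrow> site set \<Rightarrow> (site \<Rightarrow> real) \<Rightarrow> real" where
  "Qf B J' X = (\<Sum>u\<in>B. \<Sum>j\<in>J'. (X u - X (padd u j))\<^sup>2)"

lemma Qf_nonneg: "Qf B J' X \<ge> 0"
  unfolding Qf_def by (intro sum_nonneg) auto

lemma Qf_term:
  assumes "finite B" "finite J'" "y \<in> B" "j \<in> J'"
  shows "(X y - X (padd y j))\<^sup>2 \<le> Qf B J' X"
proof -
  have "(X y - X (padd y j))\<^sup>2 \<le> (\<Sum>j\<in>J'. (X y - X (padd y j))\<^sup>2)"
    by (rule member_le_sum) (use assms in auto)
  also have "\<dots> \<le> Qf B J' X" unfolding Qf_def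
    by (rule member_le_sum[where f="\<lambda>u. \<Sum>j\<in>J'. (X u - X (padd u j))\<^sup>2"]) (use assms in \<open>auto intro: sum_nonneg\<close>)
  finally show ?thesis .
qed

lemma sq_tri: "(a::real)\<^sup>2 \<le> 2 * b\<^sup>2 + 2 * (a - b)\<^sup>2"
proof -
  have "0 \<le> (a - 2 * b)\<^sup>2" by simp
  then show ?thesis by (simp add: power2_eq_square algebra_simps)
qed

lemma Q_control:
  fixes B J :: "site set"
  assumes finB: "finite B" and finJ: "finite {j \<in> J. j \<noteq> (0, 0)}"
    and irr: "\<And>x. ((0, 0), x) \<in> {(y, padd y j) | y j. j \<in> J}\<^sup>*"
  shows "\<exists>L>0. \<forall>X. (\<forall>v. v \<notin> B \<longrightarrow> X v = 0) \<longrightarrow> (\<Sum>y\<in>B. (X y)\<^sup>2) \<le> L * Qf B {j \<in> J. j \<noteq> (0, 0)} X"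
proof -
  let ?J' = "{j \<in> J. j \<noteq> (0, 0)}"
  let ?R = "{(y, padd y j) | y j. j \<in> J}"
  define S where "S y \<longleftrightarrow> (\<exists>L. \<forall>X. (\<forall>v. v \<notin> B \<longrightarrow> X v = 0) \<longrightarrow> (X y)\<^sup>2 \<le> L * Qf B ?J' X)" for y
  have out: "S y" if "y \<notin> B" for y
    unfolding S_def using that by (intro exI[of _ 0]) (auto simp del: split_paired_All)
  have stepS: "S y" if j: "j \<in> J" and Sy: "S (padd y j)" for y j
  proof (cases "j = (0, 0)")
    case True
    then have "padd y j = y" by (simp add: padd_def)
    then show ?thesis using Sy by simp
  next
    case False
    show ?thesis
    proof (cases "y \<in> B")
      case False then show ?thesis by (rule out)
    next
      case yB: True
      obtain L where L: "\<And>X. (\<forall>v. v \<notin> B \<longrightarrow> X v = 0) \<Longrightarrow> (X (padd y j))\<^sup>2 \<le> L * Qf B ?J' X"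
        using Sy unfolding S_def by blast
      show ?thesis unfolding S_def
      proof (intro exI[of _ "2 * L + 2"] allI impI)
        fix X :: "site \<Rightarrow> real" assume X: "\<forall>v. v \<notin> B \<longrightarrow> X v = 0"
        have "(X y)\<^sup>2 \<le> 2 * (X (padd y j))\<^sup>2 + 2 * (X y - X (padd y j))\<^sup>2" by (rule sq_tri)
        also have "\<dots> \<le> 2 * (L * Qf B ?J' X) + 2 * Qf B ?J' X"
          using L[OF X] Qf_term[OF finB finJ yB, of j X] j False by (intro add_mono) auto
        finally show "(X y)\<^sup>2 \<le> (2 * L + 2) * Qf B ?J' X" by (simp add: algebra_simps)
      qed
    qed
  qed
  have trans: "\<forall>x. S (padd x w) \<longrightarrow> S x" if "((0, 0), w) \<in> ?R\<^sup>*" for w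
    using that
  proof (induction rule: rtrancl_induct)
    case base
    then show ?case by (simp add: padd_def)
  next
    case (step y z)
    then obtain j where j: "j \<in> J" "z = padd y j" by blast
    show ?case
    proof (intro allI impI)
      fix x assume "S (padd x z)"
      then have "S (padd (padd x y) j)" using j by (simp add: padd_def add.assoc)
      then have "S (padd x y)" by (rule stepS[OF j(1)])
      then show "S x" using step.IH by blast
    qed
  qed
  have allS: "S x" for x
  proof -
    obtain y :: site where y: "y \<notin> B"
      using ex_new_if_finite[OF _ finB] by (auto simp: finite_prod)
    have "padd x (pdiff y x) = y" by (simp add: padd_def pdiff_def)
    then show ?thesis using trans[OF irr[of "pdiff y x"]] out[OF y] by metis
  qed
  then obtain Lf where Lf: "\<And>y X. (\<forall>v. v \<notin> B \<longrightarrow> X v = 0) \<Longrightarrow> (X y)\<^sup>2 \<le> Lf y * Qf B ?J' X"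
    unfolding S_def by metis
  define L where "L = 1 + (\<Sum>y\<in>B. \<bar>Lf y\<bar>)"
  have Lp: "L > 0" unfolding L_def by (smt (verit) sum_nonneg abs_ge_zero)
  show ?thesis
  proof (intro exI[of _ L] conjI allI impI Lp)
    fix X :: "site \<Rightarrow> real" assume X: "\<forall>v. v \<notin> B \<longrightarrow> X v = 0"
    have "(\<Sum>y\<in>B. (X y)\<^sup>2) \<le> (\<Sum>y\<in>B. \<bar>Lf y\<bar> * Qf B ?J' X)"
    proof (rule sum_mono)
      fix y
      have "Lf y * Qf B ?J' X \<le> \<bar>Lf y\<bar> * Qf B ?J' X" using Qf_nonneg by (intro mult_right_mono) auto
      then show "(X y)\<^sup>2 \<le> \<bar>Lf y\<bar> * Qf B ?J' X" using Lf[OF X, of y] by linarith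
    qed
    also have "\<dots> = (\<Sum>y\<in>B. \<bar>Lf y\<bar>) * Qf B ?J' X" by (simp add: sum_distrib_right)
    also have "\<dots> \<le> L * Qf B ?J' X" unfolding L_def using Qf_nonneg by (intro mult_right_mono) auto
    finally show "(\<Sum>y\<in>B. (X y)\<^sup>2) \<le> L * Qf B ?J' X" .
  qed
qed



lemma ratio_le:
  fixes N D Z C :: real
  assumes "D > 0 \<Longrightarrow> N \<le> C * D" "C \<ge> 0" "D \<ge> 0"
  shows "(N / Z) / (D / Z) \<le> C"
proof (cases "Z = 0 \<or> D = 0")
  case True then show ?thesis using assms by auto
next
  case False
  then have "(N / Z) / (D / Z) = N / D" by simp
  also have "\<dots> \<le> C" using assms False by (simp add: divide_le_eq)
  finally show ?thesis .
qed

lemma enn_ratio: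
  fixes Nn Dn :: ennreal
  assumes "Nn \<le> ennreal C * Dn" "C \<ge> 0"
  shows "enn2real Dn > 0 \<Longrightarrow> enn2real Nn \<le> C * enn2real Dn"
proof -
  assume "enn2real Dn > 0"
  then have "Dn \<noteq> \<top>" by auto
  then have "ennreal C * Dn \<noteq> \<top>" using ennreal_mult_eq_top_iff by auto
  then show "enn2real Nn \<le> C * enn2real Dn"
    using assms enn2real_mono[OF assms(1)] by (simp add: enn2real_mult less_top[symmetric])
qed

lemma adm_facts:
  assumes "admissible_potential r \<Psi>"
  shows "\<And>k x. \<Psi> k differentiable at x" "\<And>k x. deriv (\<Psi> k) differentiable at x"
    "\<And>k x. deriv (deriv (\<Psi> k)) x \<ge> 0" "\<And>k x. \<Psi> k x = \<Psi> k (- x)"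
    "\<And>k. convex_on UNIV (\<Psi> k)"
  using assms unfolding admissible_potential_def
  by (auto intro!: convex_from_deriv)



lemma ham_lower1:
  fixes \<Psi> :: "site \<Rightarrow> real \<Rightarrow> real" and B J' :: "site set"
  assumes fin: "finite B" and finJ: "finite J'"
    and J'sub: "\<And>j. j \<in> J' \<Longrightarrow> j \<noteq> (0, 0) \<and> normInf j \<le> int r"
    and ge0: "\<And>k t. \<Psi> k t \<ge> \<Psi> k 0"
    and geJ: "\<And>j t. j \<in> J' \<Longrightarrow> \<Psi> j t \<ge> \<Psi> j 0 + c / 2 * t\<^sup>2"
  shows "hamiltonian \<Psi> r B X \<ge> (1/2) * (\<Sum>(u, v)\<in>bonds r B. \<Psi> (pdiff v u) 0) + c / 4 * Qf B J' X"
proof -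
  define F where "F = (\<lambda>(u, v). \<Psi> (pdiff v u) (X u - X v) - \<Psi> (pdiff v u) 0)"
  define g where "g = (\<lambda>(u :: site, j :: site). (u, padd u j))"
  have finb: "finite (bonds r B)" by (rule finite_bonds[OF fin])
  have pd: "pdiff (padd u j) u = j" for u j by (simp add: padd_def pdiff_def)
  have Psub: "g ` (B \<times> J') \<subseteq> bonds r B"
  proof
    fix p assume "p \<in> g ` (B \<times> J')"
    then obtain u j where uj: "u \<in> B" "j \<in> J'" "p = (u, padd u j)" unfolding g_def by auto
    have "u \<noteq> padd u j" using J'sub[OF uj(2)] by (auto simp: padd_def prod_eq_iff)
    then show "p \<in> bonds r B" using uj J'sub[OF uj(2)] by (auto simp: bonds_def pd)
  qed
  have inj: "inj_on g (B \<times> J')"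
    unfolding g_def by (auto simp: inj_on_def padd_def prod_eq_iff)
  have F0: "F p \<ge> 0" for p unfolding F_def using ge0 by (auto simp: case_prod_beta')
  have "(\<Sum>p\<in>bonds r B. F p) \<ge> (\<Sum>p\<in>g ` (B \<times> J'). F p)"
    by (rule sum_mono2[OF finb Psub]) (use F0 in auto)
  moreover have "(\<Sum>p\<in>g ` (B \<times> J'). F p) = (\<Sum>q\<in>B \<times> J'. F (g q))"
    by (rule sum.reindex[OF inj, unfolded comp_def])
  moreover have "(\<Sum>q\<in>B \<times> J'. F (g q)) \<ge> (\<Sum>q\<in>B \<times> J'. c / 2 * (X (fst q) - X (padd (fst q) (snd q)))\<^sup>2)"
  proof (rule sum_mono)
    fix q assume q: "q \<in> B \<times> J'"
    then show "c / 2 * (X (fst q) - X (padd (fst q) (snd q)))\<^sup>2 \<le> F (g q)"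
      using geJ[of "snd q" "X (fst q) - X (padd (fst q) (snd q))"]
      unfolding F_def g_def by (auto simp: case_prod_beta' pd)
  qed
  moreover have "(\<Sum>q\<in>B \<times> J'. c / 2 * (X (fst q) - X (padd (fst q) (snd q)))\<^sup>2) = c / 2 * Qf B J' X"
  proof -
    have "(\<Sum>q\<in>B \<times> J'. c / 2 * (X (fst q) - X (padd (fst q) (snd q)))\<^sup>2) = c / 2 * (\<Sum>q\<in>B \<times> J'. (X (fst q) - X (padd (fst q) (snd q)))\<^sup>2)"
      by (simp add: sum_distrib_left)
    also have "(\<Sum>q\<in>B \<times> J'. (X (fst q) - X (padd (fst q) (snd q)))\<^sup>2) = Qf B J' X"
      unfolding Qf_def using sum.cartesian_product[of "\<lambda>u j. (X u - X (padd u j))\<^sup>2" J' B]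
      by (simp add: case_prod_beta')
    finally show ?thesis .
  qed
  ultimately have main: "(\<Sum>p\<in>bonds r B. F p) \<ge> c / 2 * Qf B J' X" by linarith
  have "(\<Sum>(u, v)\<in>bonds r B. \<Psi> (pdiff v u) (X u - X v)) = (\<Sum>(u, v)\<in>bonds r B. \<Psi> (pdiff v u) 0) + (\<Sum>p\<in>bonds r B. F p)"
    unfolding F_def by (simp add: sum.distrib[symmetric] case_prod_beta')
  then show ?thesis using main unfolding hamiltonian_def by linarith
qed

lemma lower_bound:
  assumes adm: "admissible_potential r \<Psi>" and fin: "finite B"
  shows "\<exists>\<kappa>>0. \<exists>K. \<forall>x. hamiltonian \<Psi> r B (cfg B (\<lambda>_. 0) x) \<ge> K + \<kappa> * (\<Sum>j\<in>B. (x j)\<^sup>2)"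
proof -
  note facts = adm_facts[OF adm]
  obtain c where c: "c > 0" and irr: "\<And>x. ((0, 0), x) \<in> {(y, padd y j) | y j. j \<in> {j. \<forall>h. deriv (deriv (\<Psi> j)) h \<ge> c}}\<^sup>*"
    using adm unfolding admissible_potential_def Let_def by blast
  define J where "J = {j. \<forall>h. deriv (deriv (\<Psi> j)) h \<ge> c}"
  define J' where "J' = {j \<in> J. j \<noteq> (0, 0)}"
  have Jn: "norm1 j \<le> int r" if "j \<in> J" for j
  proof (rule ccontr)
    assume "\<not> norm1 j \<le> int r"
    moreover have "\<forall>k. norm1 k > int r \<longrightarrow> (\<forall>x. \<Psi> k x = 0)" using adm unfolding admissible_potential_def by blast
    ultimately have "\<Psi> j = (\<lambda>_. 0)" by (simp add: fun_eq_iff del: split_paired_All)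
    then have "deriv (deriv (\<Psi> j)) 0 = 0" by simp
    moreover have "c \<le> deriv (deriv (\<Psi> j)) 0" using that unfolding J_def by blast
    ultimately show False using c by linarith
  qed
  have nn: "normInf j \<le> norm1 j" for j by (simp add: normInf_def norm1_def)
  have J'sub: "j \<noteq> (0, 0) \<and> normInf j \<le> int r" if "j \<in> J'" for j
  proof -
    have jJ: "j \<in> J" and jn: "j \<noteq> (0, 0)" using that unfolding J'_def by blast+
    show ?thesis using jn order_trans[OF nn[of j] Jn[OF jJ]] by blast
  qed
  have finJ: "finite J'"
    by (rule finite_subset[OF _ finite_box[of r]]) (use J'sub in auto)
  have ge0: "\<Psi> k t \<ge> \<Psi> k 0" for k t
    using quad_lower[where f="\<Psi> k" and c=0 and t=t] facts by simp
  have geJ: "\<Psi> j t \<ge> \<Psi> j 0 + c / 2 * t\<^sup>2" if "j \<in> J'" for j t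
  proof -
    have "\<forall>h. deriv (deriv (\<Psi> j)) h \<ge> c" using that unfolding J'_def J_def by blast
    then show ?thesis using quad_lower[where f="\<Psi> j" and c=c and t=t] facts by blast
  qed
  obtain L where L: "L > 0" and LQ: "\<And>X. (\<forall>v. v \<notin> B \<longrightarrow> X v = 0) \<Longrightarrow> (\<Sum>y\<in>B. (X y)\<^sup>2) \<le> L * Qf B J' X"
    using Q_control[OF fin, of J] finJ irr unfolding J'_def J_def by blast
  define K where "K = (1/2) * (\<Sum>(u, v)\<in>bonds r B. \<Psi> (pdiff v u) 0)"
  have all: "\<forall>x. K + c / (4 * L) * (\<Sum>j\<in>B. (x j)\<^sup>2) \<le> hamiltonian \<Psi> r B (cfg B (\<lambda>_. 0) x)"
  proof
    fix x
    let ?X = "cfg B (\<lambda>_. 0) x"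
    have H: "hamiltonian \<Psi> r B ?X \<ge> K + c / 4 * Qf B J' ?X"
      unfolding K_def by (rule ham_lower1[OF fin finJ J'sub ge0 geJ])
    have "(\<Sum>j\<in>B. (x j)\<^sup>2) = (\<Sum>j\<in>B. (?X j)\<^sup>2)" by (simp add: cfg_def)
    also have "\<dots> \<le> L * Qf B J' ?X" by (rule LQ) (simp add: cfg_def)
    finally have "c / (4 * L) * (\<Sum>j\<in>B. (x j)\<^sup>2) \<le> c / (4 * L) * (L * Qf B J' ?X)"
      using c L by (intro mult_left_mono) auto
    also have "\<dots> = c / 4 * Qf B J' ?X" using L by simp
    finally show "K + c / (4 * L) * (\<Sum>j\<in>B. (x j)\<^sup>2) \<le> hamiltonian \<Psi> r B ?X" using H by linarith
  qed
  have "c / (4 * L) > 0" using c L by simp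
  then show ?thesis using all by blast
qed

lemma S_exp_bound:
  fixes S \<kappa> :: real assumes "\<kappa> > 0"
  shows "S * exp (- \<kappa> * S) \<le> 2 / \<kappa> * exp (- (\<kappa> / 2) * S)"
proof -
  have "\<kappa> * S / 2 \<le> exp (\<kappa> * S / 2)" using exp_ge_add_one_self[of "\<kappa> * S / 2"] by linarith
  then have "S \<le> 2 / \<kappa> * exp (\<kappa> * S / 2)" using assms by (simp add: field_simps)
  then have "S * exp (- \<kappa> * S) \<le> 2 / \<kappa> * exp (\<kappa> * S / 2) * exp (- \<kappa> * S)"
    by (intro mult_right_mono) auto
  also have "\<dots> = 2 / \<kappa> * exp (- (\<kappa> / 2) * S)"
    by (simp add: mult.assoc exp_add[symmetric])
  finally show ?thesis .
qed

lemma finiteness: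
  assumes adm: "admissible_potential r \<Psi>" and fin: "finite B" and iB: "i \<in> B"
  shows "\<exists>z m0. (\<integral>\<^sup>+x. rho \<Psi> r B (\<lambda>_. 0) x \<partial>PiM B (\<lambda>_. lborel)) = ennreal z \<and> z > 0 \<and>
     (\<integral>\<^sup>+x. ennreal ((x i)\<^sup>2) * rho \<Psi> r B (\<lambda>_. 0) x \<partial>PiM B (\<lambda>_. lborel)) = ennreal m0 \<and> m0 \<ge> 0"
proof -
  let ?M = "PiM B (\<lambda>_::site. lborel :: real measure)"
  let ?r = "rho \<Psi> r B (\<lambda>_. 0)"
  note facts = adm_facts[OF adm]
  have rm: "?r \<in> borel_measurable ?M" by (rule rho_meas[OF fin facts(1)])
  have xi: "(\<lambda>x. x i) \<in> borel_measurable ?M"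
    using measurable_component_singleton[OF iB, of "\<lambda>_. lborel"] by simp
  obtain \<kappa> K where k: "\<kappa> > 0" and HK: "\<And>x. hamiltonian \<Psi> r B (cfg B (\<lambda>_. 0) x) \<ge> K + \<kappa> * (\<Sum>j\<in>B. (x j)\<^sup>2)"
    using lower_bound[OF adm fin] by blast
  define S where "S x = (\<Sum>j\<in>B. (x j)\<^sup>2)" for x :: "site \<Rightarrow> real"
  have S0: "S x \<ge> 0" for x unfolding S_def by (auto intro: sum_nonneg)
  have Sm: "S \<in> borel_measurable ?M"
  proof -
    have "(\<lambda>x. (x j)\<^sup>2) \<in> borel_measurable ?M" if "j \<in> B" for j
    proof -
      have "(\<lambda>x. x j) \<in> borel_measurable ?M"
        using measurable_component_singleton[OF that, of "\<lambda>_. lborel"] by simp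
      then show ?thesis by (rule borel_measurable_power)
    qed
    then show ?thesis unfolding S_def by (rule borel_measurable_sum[where f="\<lambda>j x. (x j)\<^sup>2"])
  qed
  have em: "(\<lambda>x. ennreal (exp (- t * S x))) \<in> borel_measurable ?M" for t
  proof -
    have ce: "continuous_on UNIV (\<lambda>s. exp (- t * s))" by (intro continuous_intros)
    show ?thesis
      using measurable_compose[OF measurable_compose[OF Sm borel_measurable_continuous_onI[OF ce]] measurable_ennreal]
      by simp
  qed
  have Si: "(x i)\<^sup>2 \<le> S x" for x unfolding S_def
    by (rule member_le_sum) (use iB fin in auto)
  have rb: "exp (- hamiltonian \<Psi> r B (cfg B (\<lambda>_. 0) x)) \<le> exp (- K) * exp (- \<kappa> * S x)" for x
    using HK[of x] unfolding S_def by (simp add: exp_add[symmetric])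
  have Zfin: "integral\<^sup>N ?M ?r < \<infinity>"
  proof -
    have "integral\<^sup>N ?M ?r \<le> (\<integral>\<^sup>+x. ennreal (exp (- K)) * ennreal (exp (- \<kappa> * S x)) \<partial>?M)"
      using rb by (intro nn_integral_mono) (simp add: rho_def ennreal_mult''[symmetric] del: ennreal_mult'')
    also have "\<dots> = ennreal (exp (- K)) * (\<integral>\<^sup>+x. ennreal (exp (- \<kappa> * S x)) \<partial>?M)"
      by (rule nn_integral_cmult) (rule em)
    also have "\<dots> < \<infinity>" using gauss_prod_fin[OF k fin] unfolding S_def
      by (simp add: ennreal_mult_less_top)
    finally show ?thesis .
  qed
  have Mfin: "(\<integral>\<^sup>+x. ennreal ((x i)\<^sup>2) * ?r x \<partial>?M) < \<infinity>"
  proof -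
    have "(\<integral>\<^sup>+x. ennreal ((x i)\<^sup>2) * ?r x \<partial>?M) \<le> (\<integral>\<^sup>+x. ennreal (exp (- K) * (2 / \<kappa>)) * ennreal (exp (- (\<kappa> / 2) * S x)) \<partial>?M)"
    proof (rule nn_integral_mono)
      fix x
      have "(x i)\<^sup>2 * exp (- hamiltonian \<Psi> r B (cfg B (\<lambda>_. 0) x)) \<le> S x * (exp (- K) * exp (- \<kappa> * S x))"
        using rb[of x] Si[of x] S0[of x] by (intro mult_mono) auto
      also have "\<dots> = exp (- K) * (S x * exp (- \<kappa> * S x))" by simp
      also have "\<dots> \<le> exp (- K) * (2 / \<kappa> * exp (- (\<kappa> / 2) * S x))"
        by (intro mult_left_mono S_exp_bound k) auto
      finally show "ennreal ((x i)\<^sup>2) * ?r x \<le> ennreal (exp (- K) * (2 / \<kappa>)) * ennreal (exp (- (\<kappa> / 2) * S x))"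
        unfolding rho_def using k
        by (simp add: ennreal_mult''[symmetric] ennreal_mult'[symmetric] mult.assoc del: ennreal_mult'' ennreal_mult')
    qed
    also have "\<dots> = ennreal (exp (- K) * (2 / \<kappa>)) * (\<integral>\<^sup>+x. ennreal (exp (- (\<kappa> / 2) * S x)) \<partial>?M)"
      by (rule nn_integral_cmult) (rule em)
    also have "\<dots> < \<infinity>" using gauss_prod_fin[of "\<kappa> / 2", OF _ fin] k unfolding S_def
      by (simp add: ennreal_mult_less_top)
    finally show ?thesis .
  qed
  have Zpos: "integral\<^sup>N ?M ?r \<noteq> 0"
  proof
    assume "integral\<^sup>N ?M ?r = 0"
    then have "AE x in ?M. ?r x = 0" using nn_integral_0_iff_AE[OF rm] by simp
    moreover have "{x \<in> space ?M. \<not> ?r x = 0} = space ?M" by (auto simp: rho_def)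
    ultimately have "emeasure ?M (space ?M) = 0"
      using AE_iff_measurable[of "space ?M" ?M "\<lambda>x. ?r x = 0"] by simp
    moreover have "emeasure ?M (space ?M) = (\<Prod>j\<in>B. emeasure lborel (UNIV :: real set))"
      unfolding space_PiM by (subst lb.emeasure_PiM[OF fin]) auto
    ultimately show False by simp
  qed
  obtain z where z: "integral\<^sup>N ?M ?r = ennreal z" "z \<ge> 0"
    using Zfin by (cases "integral\<^sup>N ?M ?r" rule: ennreal_cases) auto
  obtain m0 where m0: "(\<integral>\<^sup>+x. ennreal ((x i)\<^sup>2) * ?r x \<partial>?M) = ennreal m0" "m0 \<ge> 0"
    using Mfin by (cases "(\<integral>\<^sup>+x. ennreal ((x i)\<^sup>2) * ?r x \<partial>?M)" rule: ennreal_cases) auto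
  have "z > 0" using z Zpos by (cases "z = 0") auto
  then show ?thesis using z m0 by blast
qed



lemma merge_cfg:
  assumes "A \<inter> B = {}" "\<Lambda> = A \<union> B"
  shows "ext_bc \<Lambda> 0 (merge A B (g, \<phi>)) = cfg B (\<lambda>j. if j \<in> A then g j else 0) \<phi>"
  using assms by (auto simp: ext_bc_def cfg_def merge_def fun_eq_iff)

theorem lemma6p3:
  fixes r :: nat and \<Psi> :: "site \<Rightarrow> real \<Rightarrow> real" and a :: real
    and \<Lambda> A :: "site set" and i :: site
  assumes "r \<ge> 1" and "admissible_potential r \<Psi>"
    and "a > 0" and "finite \<Lambda>" and "A \<subseteq> \<Lambda>" and "i \<in> \<Lambda>"
  shows "gibbs_cond \<Psi> r \<Lambda> 0 (\<lambda>h. (h i)\<^sup>2) {h. \<forall>j\<in>A. \<bar>h j\<bar> \<le> a}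
         \<le> 4 * a\<^sup>2 + 4 * gibbs_exp \<Psi> r (\<Lambda> - A) 0 (\<lambda>h. (h i)\<^sup>2)"
proof -
  let ?M = "PiM \<Lambda> (\<lambda>_::site. lborel :: real measure)"
  note facts = adm_facts[OF assms(2)]
  have finA: "finite A" using assms(4,5) by (rule rev_finite_subset)
  define E where "E = {h :: site \<Rightarrow> real. \<forall>j\<in>A. \<bar>h j\<bar> \<le> a}"
  define W where "W h = gibbs_weight \<Psi> r \<Lambda> 0 h" for h
  define fN where "fN h = (ext_bc \<Lambda> 0 h i)\<^sup>2 * indicator E (ext_bc \<Lambda> 0 h) * W h" for h
  define fD where "fD h = indicator E (ext_bc \<Lambda> 0 h) * W h" for h
  have Wpos: "W h > 0" for h unfolding W_def gibbs_weight_def by simp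
  have fN0: "fN h \<ge> 0" for h unfolding fN_def using Wpos[of h] by auto
  have fD0: "fD h \<ge> 0" for h unfolding fD_def using Wpos[of h] by auto
  have Wm: "W \<in> borel_measurable ?M"
  proof -
    have hm: "(\<lambda>h. hamiltonian \<Psi> r \<Lambda> (cfg \<Lambda> (\<lambda>_. 0) h)) \<in> borel_measurable ?M"
      by (rule ham_meas[OF assms(4) facts(1)])
    have ce: "continuous_on UNIV (\<lambda>t::real. exp (- t))" by (intro continuous_intros)
    show ?thesis using measurable_compose[OF hm borel_measurable_continuous_onI[OF ce]]
      unfolding W_def gibbs_weight_def ext_bc_cfg by simp
  qed
  have extm: "(\<lambda>h. ext_bc \<Lambda> 0 h j) \<in> borel_measurable ?M" for j
  proof (cases "j \<in> \<Lambda>")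
    case True
    then have "(\<lambda>h. h j) \<in> borel_measurable ?M"
      using measurable_component_singleton[OF True, of "\<lambda>_. lborel"] by simp
    then show ?thesis using True by (simp add: ext_bc_def)
  next
    case False then show ?thesis by (simp add: ext_bc_def)
  qed
  have indeq: "(indicator E (ext_bc \<Lambda> 0 h) :: real) = (\<Prod>j\<in>A. indicator {- a..a} (ext_bc \<Lambda> 0 h j))" for h
  proof (cases "ext_bc \<Lambda> 0 h \<in> E")
    case True
    then have "\<forall>j\<in>A. ext_bc \<Lambda> 0 h j \<in> {- a..a}" unfolding E_def by (auto simp: abs_le_iff)
    then show ?thesis using True by (simp add: indicator_def)
  next
    case False
    then obtain j where "j \<in> A" "ext_bc \<Lambda> 0 h j \<notin> {- a..a}" unfolding E_def by (auto simp: abs_le_iff)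
    then show ?thesis using False finA by (auto simp: indicator_def intro!: prod_zero)
  qed
  have indm: "(\<lambda>h. indicator E (ext_bc \<Lambda> 0 h) :: real) \<in> borel_measurable ?M"
  proof -
    have "(\<lambda>h. \<Prod>j\<in>A. (indicator {- a..a} (ext_bc \<Lambda> 0 h j) :: real)) \<in> borel_measurable ?M"
    proof (rule borel_measurable_prod)
      fix j
      show "(\<lambda>h. indicator {- a..a} (ext_bc \<Lambda> 0 h j) :: real) \<in> borel_measurable ?M"
        using measurable_compose[OF extm borel_measurable_indicator[of "{- a..a}" borel]] by simp
    qed
    then show ?thesis by (simp add: indeq)
  qed
  have sqm: "(\<lambda>h. (ext_bc \<Lambda> 0 h i)\<^sup>2) \<in> borel_measurable ?M"
    by (rule borel_measurable_power[OF extm])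
  have fNm: "fN \<in> borel_measurable ?M"
  proof -
    have "(\<lambda>h. (ext_bc \<Lambda> 0 h i)\<^sup>2 * indicator E (ext_bc \<Lambda> 0 h) * W h) \<in> borel_measurable ?M"
      by (intro borel_measurable_times sqm indm Wm)
    then show ?thesis unfolding fN_def[abs_def] .
  qed
  have fDm: "fD \<in> borel_measurable ?M"
  proof -
    have "(\<lambda>h. indicator E (ext_bc \<Lambda> 0 h) * W h) \<in> borel_measurable ?M"
      by (intro borel_measurable_times indm Wm)
    then show ?thesis unfolding fD_def[abs_def] .
  qed
  have eNm: "(\<lambda>h. ennreal (fN h)) \<in> borel_measurable ?M" using measurable_compose[OF fNm measurable_ennreal] by simp
  have eDm: "(\<lambda>h. ennreal (fD h)) \<in> borel_measurable ?M" using measurable_compose[OF fDm measurable_ennreal] by simp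
  have LHS: "gibbs_cond \<Psi> r \<Lambda> 0 (\<lambda>h. (h i)\<^sup>2) {h. \<forall>j\<in>A. \<bar>h j\<bar> \<le> a}
      = ((integral\<^sup>L ?M fN) / (integral\<^sup>L ?M W)) / ((integral\<^sup>L ?M fD) / (integral\<^sup>L ?M W))"
    unfolding gibbs_cond_def gibbs_exp_def fN_def fD_def W_def E_def by simp
  have NI: "integral\<^sup>L ?M fN = enn2real (\<integral>\<^sup>+h. ennreal (fN h) \<partial>?M)"
    by (rule integral_eq_nn_integral[OF fNm]) (auto simp: fN0)
  have DI: "integral\<^sup>L ?M fD = enn2real (\<integral>\<^sup>+h. ennreal (fD h) \<partial>?M)"
    by (rule integral_eq_nn_integral[OF fDm]) (auto simp: fD0)
  have RHS0: "gibbs_exp \<Psi> r (\<Lambda> - A) 0 (\<lambda>h. (h i)\<^sup>2) \<ge> 0"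
    unfolding gibbs_exp_def gibbs_weight_def by (intro divide_nonneg_nonneg integral_nonneg) auto
  have main: "\<exists>C. C \<ge> 0 \<and> C \<le> 4 * a\<^sup>2 + 4 * gibbs_exp \<Psi> r (\<Lambda> - A) 0 (\<lambda>h. (h i)\<^sup>2) \<and>
      (\<integral>\<^sup>+h. ennreal (fN h) \<partial>?M) \<le> ennreal C * (\<integral>\<^sup>+h. ennreal (fD h) \<partial>?M)"
  proof (cases "i \<in> A")
    case True
    have "(\<integral>\<^sup>+h. ennreal (fN h) \<partial>?M) \<le> (\<integral>\<^sup>+h. ennreal (a\<^sup>2) * ennreal (fD h) \<partial>?M)"
    proof (rule nn_integral_mono)
      fix h
      have "fN h \<le> a\<^sup>2 * fD h"
      proof (cases "ext_bc \<Lambda> 0 h \<in> E")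
        case True
        then have "\<bar>ext_bc \<Lambda> 0 h i\<bar> \<le> a" using \<open>i \<in> A\<close> unfolding E_def by auto
        then have "(ext_bc \<Lambda> 0 h i)\<^sup>2 \<le> a\<^sup>2"
          by (metis abs_ge_zero abs_le_square_iff abs_of_pos assms(3))
        then show ?thesis unfolding fN_def fD_def using True Wpos[of h] by simp
      next
        case False then show ?thesis unfolding fN_def fD_def by simp
      qed
      then show "ennreal (fN h) \<le> ennreal (a\<^sup>2) * ennreal (fD h)"
        by (simp add: ennreal_mult''[symmetric] fD0 del: ennreal_mult'')
    qed
    also have "\<dots> = ennreal (a\<^sup>2) * (\<integral>\<^sup>+h. ennreal (fD h) \<partial>?M)"
      by (rule nn_integral_cmult[OF eDm])
    finally show ?thesis using RHS0 by (intro exI[of _ "a\<^sup>2"]) auto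
  next
    case False
    define B where "B = \<Lambda> - A"
    have iB: "i \<in> B" using False assms(6) unfolding B_def by auto
    have finB: "finite B" using assms(4) unfolding B_def by auto
    have AB: "A \<inter> B = {}" "\<Lambda> = A \<union> B" using assms(5) unfolding B_def by auto
    obtain z m0 where Z0: "(\<integral>\<^sup>+x. rho \<Psi> r B (\<lambda>_. 0) x \<partial>PiM B (\<lambda>_. lborel)) = ennreal z" and z: "z > 0"
      and M0: "(\<integral>\<^sup>+x. ennreal ((x i)\<^sup>2) * rho \<Psi> r B (\<lambda>_. 0) x \<partial>PiM B (\<lambda>_. lborel)) = ennreal m0" and m0: "m0 \<ge> 0"
      using finiteness[OF assms(2) finB iB] by blast
    define C where "C = 4 * a\<^sup>2 + 4 * (m0 / z)"
    have C0: "C \<ge> 0" unfolding C_def using z m0 by simp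
    have rhs: "gibbs_exp \<Psi> r (\<Lambda> - A) 0 (\<lambda>h. (h i)\<^sup>2) = m0 / z"
    proof -
      let ?MB = "PiM B (\<lambda>_::site. lborel :: real measure)"
      have xiB: "(\<lambda>x. x i) \<in> borel_measurable ?MB"
        using measurable_component_singleton[OF iB, of "\<lambda>_. lborel"] by simp
      have gw: "gibbs_weight \<Psi> r B 0 h = exp (- hamiltonian \<Psi> r B (cfg B (\<lambda>_. 0) h))" for h
        unfolding gibbs_weight_def ext_bc_cfg ..
      have gwm: "(\<lambda>h. gibbs_weight \<Psi> r B 0 h) \<in> borel_measurable ?MB"
      proof -
        have hm: "(\<lambda>h. hamiltonian \<Psi> r B (cfg B (\<lambda>_. 0) h)) \<in> borel_measurable ?MB"
          by (rule ham_meas[OF finB facts(1)])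
        have ce: "continuous_on UNIV (\<lambda>t::real. exp (- t))" by (intro continuous_intros)
        show ?thesis using measurable_compose[OF hm borel_measurable_continuous_onI[OF ce]]
          unfolding gw by simp
      qed
      have sqB: "(\<lambda>h. (ext_bc B 0 h i)\<^sup>2 * gibbs_weight \<Psi> r B 0 h) \<in> borel_measurable ?MB"
      proof -
        have "(\<lambda>h. (h i)\<^sup>2 * gibbs_weight \<Psi> r B 0 h) \<in> borel_measurable ?MB"
          by (intro borel_measurable_times borel_measurable_power xiB gwm)
        then show ?thesis using iB by (simp add: ext_bc_def)
      qed
      have n: "(\<integral>h. (ext_bc B 0 h i)\<^sup>2 * gibbs_weight \<Psi> r B 0 h \<partial>?MB) = m0"
      proof -
        have "(\<integral>h. (ext_bc B 0 h i)\<^sup>2 * gibbs_weight \<Psi> r B 0 h \<partial>?MB)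
            = enn2real (\<integral>\<^sup>+h. ennreal ((ext_bc B 0 h i)\<^sup>2 * gibbs_weight \<Psi> r B 0 h) \<partial>?MB)"
          by (rule integral_eq_nn_integral[OF sqB]) (auto simp: ext_bc_def gibbs_weight_def)
        also have "(\<integral>\<^sup>+h. ennreal ((ext_bc B 0 h i)\<^sup>2 * gibbs_weight \<Psi> r B 0 h) \<partial>?MB)
            = (\<integral>\<^sup>+x. ennreal ((x i)\<^sup>2) * rho \<Psi> r B (\<lambda>_. 0) x \<partial>?MB)"
          using iB by (intro nn_integral_cong) (simp add: ext_bc_def gw rho_def ennreal_mult')
        finally show ?thesis using M0 m0 by simp
      qed
      have d: "(\<integral>h. gibbs_weight \<Psi> r B 0 h \<partial>?MB) = z"
      proof -
        have "(\<integral>h. gibbs_weight \<Psi> r B 0 h \<partial>?MB) = enn2real (\<integral>\<^sup>+h. ennreal (gibbs_weight \<Psi> r B 0 h) \<partial>?MB)"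
          by (rule integral_eq_nn_integral[OF gwm]) (auto simp: gibbs_weight_def)
        also have "(\<integral>\<^sup>+h. ennreal (gibbs_weight \<Psi> r B 0 h) \<partial>?MB) = (\<integral>\<^sup>+x. rho \<Psi> r B (\<lambda>_. 0) x \<partial>?MB)"
          by (intro nn_integral_cong) (simp add: gw rho_def)
        finally show ?thesis using Z0 z by simp
      qed
      show ?thesis unfolding gibbs_exp_def B_def[symmetric] using n d by simp
    qed
    have "(\<integral>\<^sup>+h. ennreal (fN h) \<partial>?M) \<le> ennreal C * (\<integral>\<^sup>+h. ennreal (fD h) \<partial>?M)"
    proof -
      let ?MA = "PiM A (\<lambda>_::site. lborel :: real measure)"
      let ?MB = "PiM B (\<lambda>_::site. lborel :: real measure)"
      have rmB: "rho \<Psi> r B G \<in> borel_measurable ?MB" for G by (rule rho_meas[OF finB facts(1)])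
      have xiB: "(\<lambda>x. x i) \<in> borel_measurable ?MB"
        using measurable_component_singleton[OF iB, of "\<lambda>_. lborel"] by simp
      have x2m: "(\<lambda>x. ennreal ((x i)\<^sup>2)) \<in> borel_measurable ?MB"
        using measurable_compose[OF borel_measurable_power[OF xiB, of 2] measurable_ennreal] by simp
      have x2r: "(\<lambda>x. ennreal ((x i)\<^sup>2) * rho \<Psi> r B G x) \<in> borel_measurable ?MB" for G
        by (rule borel_measurable_times_ennreal[OF x2m rmB])
      have Meq: "?M = PiM (A \<union> B) (\<lambda>_. lborel)" using AB by simp
      have fold: "integral\<^sup>N ?M F = (\<integral>\<^sup>+g. \<integral>\<^sup>+\<phi>. F (merge A B (g, \<phi>)) \<partial>?MB \<partial>?MA)"
        if "F \<in> borel_measurable ?M" for F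
        unfolding Meq by (rule lb.product_nn_integral_fold) (use AB finA finB that Meq in auto)
      define Gg where "Gg g = (\<lambda>j. if j \<in> A then g j else (0::real))" for g :: "site \<Rightarrow> real"
      define \<kappa> where "\<kappa> g = hamiltonian \<Psi> r \<Lambda> (cfg B (Gg g) (\<lambda>_. 0)) - hamiltonian \<Psi> r B (cfg B (Gg g) (\<lambda>_. 0))" for g
      define ind where "ind g = (if \<forall>j\<in>A. \<bar>g j\<bar> \<le> a then 1 else (0::real))" for g :: "site \<Rightarrow> real"
      define cg where "cg g = ennreal (ind g * exp (- \<kappa> g))" for g
      have ptw: "ennreal (fN (merge A B (g, \<phi>))) = cg g * (ennreal ((\<phi> i)\<^sup>2) * rho \<Psi> r B (Gg g) \<phi>)
          \<and> ennreal (fD (merge A B (g, \<phi>))) = cg g * rho \<Psi> r B (Gg g) \<phi>" for g \<phi>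
      proof -
        let ?X = "cfg B (Gg g) \<phi>"
        have ext: "ext_bc \<Lambda> 0 (merge A B (g, \<phi>)) = ?X" unfolding Gg_def by (rule merge_cfg[OF AB])
        have Xi: "?X i = \<phi> i" using iB by (simp add: cfg_def)
        have XE: "indicator E ?X = ind g"
        proof -
          have "(\<forall>j\<in>A. \<bar>?X j\<bar> \<le> a) = (\<forall>j\<in>A. \<bar>g j\<bar> \<le> a)" using AB by (auto simp: cfg_def Gg_def)
          then show ?thesis unfolding E_def ind_def by (simp add: indicator_def)
        qed
        have "hamiltonian \<Psi> r \<Lambda> ?X - hamiltonian \<Psi> r B ?X = \<kappa> g"
          unfolding \<kappa>_def by (rule ham_split[OF assms(4)]) (use AB in \<open>auto simp: cfg_def\<close>)
        then have WX: "W (merge A B (g, \<phi>)) = exp (- \<kappa> g) * exp (- hamiltonian \<Psi> r B ?X)"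
          unfolding W_def gibbs_weight_def ext by (simp add: exp_add[symmetric])
        have i0: "ind g \<ge> 0" unfolding ind_def by simp
        show ?thesis unfolding fN_def fD_def ext Xi XE WX cg_def rho_def using i0
          by (simp add: ennreal_mult'[symmetric] ennreal_mult''[symmetric] mult_ac del: ennreal_mult' ennreal_mult'')
      qed
      have "(\<integral>\<^sup>+h. ennreal (fN h) \<partial>?M) = (\<integral>\<^sup>+g. \<integral>\<^sup>+\<phi>. ennreal (fN (merge A B (g, \<phi>))) \<partial>?MB \<partial>?MA)"
        by (rule fold[OF eNm])
      also have "\<dots> = (\<integral>\<^sup>+g. cg g * (\<integral>\<^sup>+\<phi>. ennreal ((\<phi> i)\<^sup>2) * rho \<Psi> r B (Gg g) \<phi> \<partial>?MB) \<partial>?MA)"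
        by (intro nn_integral_cong) (simp add: ptw nn_integral_cmult[OF x2r])
      also have "\<dots> \<le> (\<integral>\<^sup>+g. ennreal C * (cg g * (\<integral>\<^sup>+\<phi>. rho \<Psi> r B (Gg g) \<phi> \<partial>?MB)) \<partial>?MA)"
      proof (rule nn_integral_mono)
        fix g
        show "cg g * (\<integral>\<^sup>+\<phi>. ennreal ((\<phi> i)\<^sup>2) * rho \<Psi> r B (Gg g) \<phi> \<partial>?MB)
            \<le> ennreal C * (cg g * (\<integral>\<^sup>+\<phi>. rho \<Psi> r B (Gg g) \<phi> \<partial>?MB))"
        proof (cases "\<forall>j\<in>A. \<bar>g j\<bar> \<le> a")
          case True
          have Gb: "\<bar>Gg g j\<bar> \<le> a" for j using True assms(3) by (auto simp: Gg_def)
          have "(\<integral>\<^sup>+\<phi>. ennreal ((\<phi> i)\<^sup>2) * rho \<Psi> r B (Gg g) \<phi> \<partial>?MB)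
              \<le> ennreal C * (\<integral>\<^sup>+\<phi>. rho \<Psi> r B (Gg g) \<phi> \<partial>?MB)"
            unfolding C_def
            by (rule core_holley[OF finB iB facts(5) facts(1) _ Gb Z0 z M0 m0]) (use assms(3) in simp)
          then have "cg g * (\<integral>\<^sup>+\<phi>. ennreal ((\<phi> i)\<^sup>2) * rho \<Psi> r B (Gg g) \<phi> \<partial>?MB)
              \<le> cg g * (ennreal C * (\<integral>\<^sup>+\<phi>. rho \<Psi> r B (Gg g) \<phi> \<partial>?MB))"
            by (rule mult_left_mono) simp
          then show ?thesis by (simp add: mult.left_commute)
        next
          case False
          then have "ind g = 0" unfolding ind_def by auto
          then show ?thesis by (simp add: cg_def)
        qed
      qed
      also have "\<dots> = (\<integral>\<^sup>+g. \<integral>\<^sup>+\<phi>. ennreal C * ennreal (fD (merge A B (g, \<phi>))) \<partial>?MB \<partial>?MA)"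
        by (intro nn_integral_cong) (simp add: ptw mult.assoc[symmetric] nn_integral_cmult[OF rmB])
      also have "\<dots> = (\<integral>\<^sup>+h. ennreal C * ennreal (fD h) \<partial>?M)"
        by (rule fold[symmetric]) (rule borel_measurable_times_ennreal[OF borel_measurable_const eDm])
      also have "\<dots> = ennreal C * (\<integral>\<^sup>+h. ennreal (fD h) \<partial>?M)"
        by (rule nn_integral_cmult[OF eDm])
      finally show ?thesis .
    qed
    then show ?thesis using C0 rhs unfolding C_def by auto
  qed
  then obtain C where C: "C \<ge> 0" "C \<le> 4 * a\<^sup>2 + 4 * gibbs_exp \<Psi> r (\<Lambda> - A) 0 (\<lambda>h. (h i)\<^sup>2)"
    "(\<integral>\<^sup>+h. ennreal (fN h) \<partial>?M) \<le> ennreal C * (\<integral>\<^sup>+h. ennreal (fD h) \<partial>?M)" by blast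
  have "((integral\<^sup>L ?M fN) / (integral\<^sup>L ?M W)) / ((integral\<^sup>L ?M fD) / (integral\<^sup>L ?M W)) \<le> C"
    unfolding NI DI by (rule ratio_le) (use enn_ratio[OF C(3) C(1)] C(1) in auto)
  then show ?thesis using LHS C(2) by simp
qed


end
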